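(* For all CPC processes $P,Q$ and every substitution $\sigma$: if $P\simeq Q$ then $\sigma P\simeq\sigma Q$.
   Context: Concurrent pattern calculus (CPC). Fix a countable set $\mathcal N$ of names. Patterns are $p ::= \lambda x \mid x \mid \ulcorner x\urcorner \mid p\bullet p$ (binding name, variable name, protected name, compound; $\bullet$ is left associative). ${\sf bn}(p)$, ${\sf vn}(p)$, ${\sf pn}(p)$ denote the sets of names occurring in $p$ as binding, variable and protected names, and ${\sf fn}(p)={\sf vn}(p)\cup{\sf pn}(p)$. A pattern is well formed if its binding names are pairwise distinct and distinct from its free names; all patterns are assumed well formed. A pattern is communicable if it contains no protected and no binding names; protection extends to communicable patterns by $\ulcorner p\bullet q\urcorner=\ulcorner p\urcorner\bullet\ulcorner q\urcorner$. A substitution is a partial function with finite domain from names to communicable patterns. On patterns: $\sigma x=\sigma(x)$ if $x\in{\sf dom}(\sigma)$ else $x$; $\sigma\ulcorner x\urcorner=\ulcorner\sigma(x)\urcorner$ if $x\in{\sf dom}(\sigma)$ else $\ulcorner x\urcorner$; $\sigma(\lambda x)=\lambda x$; $\sigma(p\bullet q)=\sigma p\bullet\sigma q$. Unification $\{p\,\|\,q\}$ is a pair of substitutions or undefined: $\{x\|x\}=\{x\|\ulcorner x\urcorner\}=\{\ulcorner x\urcorner\|x\}=\{\ulcorner x\urcorner\|\ulcorner x\urcorner\}=(\{\},\{\})$; $\{\lambda x\|q\}=(\{q/x\},\{\})$ if $q$ is communicable; $\{p\|\lambda x\}=(\{\},\{p/x\})$ if $p$ is communicable; $\{p_1\bullet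 p_2\|q_1\bullet q_2\}=(\sigma_1\cup\sigma_2,\rho_1\cup\rho_2)$ if $\{p_i\|q_i\}=(\sigma_i,\rho_i)$ for $i=1,2$; undefined otherwise. Processes: $P ::= 0 \mid P|P \mid\ !P \mid (\nu x)P \mid p\to P$ (the binding names of $p$ bind in $P$; ${\sf fn}(p\to P)={\sf fn}(p)\cup({\sf fn}(P)\setminus{\sf bn}(p))$; other free names as usual). Substitution on processes is capture avoiding (up to $\alpha$-conversion). Structural congruence $\equiv$ is the least congruence containing $\alpha$-conversion and $P|0\equiv P$, $P|Q\equiv Q|P$, $P|(Q|R)\equiv(P|Q)|R$, $(\nu n)0\equiv 0$, $(\nu n)(\nu m)P\equiv(\nu m)(\nu n)P$, $!P\equiv P|!P$, $P|(\nu n)Q\equiv(\nu n)(P|Q)$ if $n\notin{\sf fn}(P)$. Reduction $\to$ is the least relation with $(p\to P)|(q\to Q)\to\sigma P|\rho Q$ whenever $\{p\|q\}=(\sigma,\rho)$, closed under $P\to P'\Rightarrow P|Q\to P'|Q$ and $(\nu n)P\to(\nu n)P'$, and under $\equiv$ on both sides. Barbs: $P\downarrow_{\tilde m}$ iff $P\equiv(\nu\tilde n)(p\to P'|P'')$ with ${\sf pn}(p)\cap\tilde n=\emptyset$ and $\tilde m={\sf fn}(p)\setminus\tilde n$. A relation $\mathcal R$ is barb preserving if $(P,Q)\in\mathcal R$ and $P\downarrow_{\tilde m}$ imply $Q\downarrow_{\tilde m}$; reduction closed if $(P,Q)\in\mathcal R$ and $P\to P'$ imply $Q\to Q'$ with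 $(P',Q')\in\mathcal R$; context closed if $(P,Q)\in\mathcal R$ implies $(C[P],C[Q])\in\mathcal R$ for every context $C[\cdot]$ (a process with one hole). Barbed congruence $\simeq$ is the largest symmetric, barb preserving, reduction closed and context closed relation on processes. *)

theory Defs
  imports Main
begin

type_synonym name = nat

datatype pat =
    PBind name        (* \<lambda>x  binding name *)
  | PVar name
  | PProt name
  | PComp pat pat     (* p \<bullet> q *)

fun bnl :: "pat \<Rightarrow> name list" where
  "bnl (PBind x) = [x]"
| "bnl (PVar x) = []"
| "bnl (PProt x) = []"
| "bnl (PComp p q) = bnl p @ bnl q"

definition bn :: "pat \<Rightarrow> name set" where
  "bn p = set (bnl p)"

fun vn :: "pat \<Rightarrow> name set" where
  "vn (PBind x) = {}"
| "vn (PVar x) = {x}"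
| "vn (PProt x) = {}"
| "vn (PComp p q) = vn p \<union> vn q"

fun pn :: "pat \<Rightarrow> name set" where
  "pn (PBind x) = {}"
| "pn (PVar x) = {}"
| "pn (PProt x) = {x}"
| "pn (PComp p q) = pn p \<union> pn q"

definition fn :: "pat \<Rightarrow> name set" where
  "fn p = vn p \<union> pn p"

definition wf_pat :: "pat \<Rightarrow> bool" where
  "wf_pat p \<longleftrightarrow> distinct (bnl p) \<and> bn p \<inter> fn p = {}"

definition communicable :: "pat \<Rightarrow> bool" where
  "communicable p \<longleftrightarrow> bn p = {} \<and> pn p = {}"

fun protect :: "pat \<Rightarrow> pat" where
  "protect (PVar x) = PProt x"
| "protect (PComp p q) = PComp (protect p) (protect q)"
| "protect p = p"

type_synonym subst = "name \<rightharpoonup> pat"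

definition is_subst :: "subst \<Rightarrow> bool" where
  "is_subst \<sigma> \<longleftrightarrow> finite (dom \<sigma>) \<and> (\<forall>q\<in>ran \<sigma>. communicable q)"

fun patsub :: "subst \<Rightarrow> pat \<Rightarrow> pat" where
  "patsub \<sigma> (PVar x) = (case \<sigma> x of Some q \<Rightarrow> q | None \<Rightarrow> PVar x)"
| "patsub \<sigma> (PProt x) = (case \<sigma> x of Some q \<Rightarrow> protect q | None \<Rightarrow> PProt x)"
| "patsub \<sigma> (PBind x) = PBind x"
| "patsub \<sigma> (PComp p q) = PComp (patsub \<sigma> p) (patsub \<sigma> q)"

fun unify :: "pat \<Rightarrow> pat \<Rightarrow> (subst \<times> subst) option" where
  "unify (PBind x) q = (if communicable q then Some ([x \<mapsto> q], Map.empty) else None)"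
| "unify p (PBind x) = (if communicable p then Some (Map.empty, [x \<mapsto> p]) else None)"
| "unify (PVar x) (PVar y) = (if x = y then Some (Map.empty, Map.empty) else None)"
| "unify (PVar x) (PProt y) = (if x = y then Some (Map.empty, Map.empty) else None)"
| "unify (PProt x) (PVar y) = (if x = y then Some (Map.empty, Map.empty) else None)"
| "unify (PProt x) (PProt y) = (if x = y then Some (Map.empty, Map.empty) else None)"
| "unify (PComp p1 p2) (PComp q1 q2) =
     (case (unify p1 q1, unify p2 q2) of
        (Some (s1, r1), Some (s2, r2)) \<Rightarrow> Some (s1 ++ s2, r1 ++ r2)
      | _ \<Rightarrow> None)"
| "unify _ _ = None"

datatype proc =
    Zero
  | Par proc proc
  | Rep proc
  | New name proc
  | Case pat proc     (* p \<rightarrow> P *)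

fun fnp :: "proc \<Rightarrow> name set" where
  "fnp Zero = {}"
| "fnp (Par P Q) = fnp P \<union> fnp Q"
| "fnp (Rep P) = fnp P"
| "fnp (New x P) = fnp P - {x}"
| "fnp (Case p P) = fn p \<union> (fnp P - bn p)"

fun wf_proc :: "proc \<Rightarrow> bool" where
  "wf_proc Zero = True"
| "wf_proc (Par P Q) = (wf_proc P \<and> wf_proc Q)"
| "wf_proc (Rep P) = wf_proc P"
| "wf_proc (New x P) = wf_proc P"
| "wf_proc (Case p P) = (wf_pat p \<and> wf_proc P)"

definition fresh :: "name set \<Rightarrow> name" where
  "fresh X = (LEAST n. n \<notin> X)"

fun fresh_list :: "nat \<Rightarrow> name set \<Rightarrow> name list" where
  "fresh_list 0 X = []"
| "fresh_list (Suc n) X = fresh X # fresh_list n (insert (fresh X) X)"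

definition rnames :: "subst \<Rightarrow> name set" where
  "rnames \<sigma> = (\<Union>q\<in>ran \<sigma>. vn q \<union> pn q \<union> bn q)"

fun rename_bn :: "(name \<rightharpoonup> name) \<Rightarrow> pat \<Rightarrow> pat" where
  "rename_bn r (PBind x) = PBind (case r x of Some y \<Rightarrow> y | None \<Rightarrow> x)"
| "rename_bn r (PComp p q) = PComp (rename_bn r p) (rename_bn r q)"
| "rename_bn r p = p"

text \<open>Bound names are renamed to fresh names (avoiding the free names of the
  process and all names of the substitution) before substituting; this is
  capture-avoiding substitution, determined up to alpha-conversion.\<close>
fun psub :: "subst \<Rightarrow> proc \<Rightarrow> proc" where
  "psub \<sigma> Zero = Zero"
| "psub \<sigma> (Par P Q) = Par (psub \<sigma> P) (psub \<sigma> Q)"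
| "psub \<sigma> (Rep P) = Rep (psub \<sigma> P)"
| "psub \<sigma> (New x P) =
     (let y = fresh (fnp (New x P) \<union> dom \<sigma> \<union> rnames \<sigma>)
      in New y (psub (\<sigma>(x \<mapsto> PVar y)) P))"
| "psub \<sigma> (Case p P) =
     (let xs = bnl p;
          ys = fresh_list (length xs) (fnp (Case p P) \<union> dom \<sigma> \<union> rnames \<sigma>)
      in Case (rename_bn (map_of (zip xs ys)) (patsub \<sigma> p))
              (psub (\<sigma> ++ map_of (zip xs (map PVar ys))) P))"

definition swapn :: "name \<Rightarrow> name \<Rightarrow> name \<Rightarrow> name" where
  "swapn a b z = (if z = a then b else if z = b then a else z)"

fun pat_swap :: "name \<Rightarrow> name \<Rightarrow> pat \<Rightarrow> pat" where
  "pat_swap a b (PBind x) = PBind (swapn a b x)"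
| "pat_swap a b (PVar x) = PVar (swapn a b x)"
| "pat_swap a b (PProt x) = PProt (swapn a b x)"
| "pat_swap a b (PComp p q) = PComp (pat_swap a b p) (pat_swap a b q)"

fun proc_swap :: "name \<Rightarrow> name \<Rightarrow> proc \<Rightarrow> proc" where
  "proc_swap a b Zero = Zero"
| "proc_swap a b (Par P Q) = Par (proc_swap a b P) (proc_swap a b Q)"
| "proc_swap a b (Rep P) = Rep (proc_swap a b P)"
| "proc_swap a b (New x P) = New (swapn a b x) (proc_swap a b P)"
| "proc_swap a b (Case p P) = Case (pat_swap a b p) (proc_swap a b P)"

inductive scong :: "proc \<Rightarrow> proc \<Rightarrow> bool" (infix "\<equiv>\<^sub>s" 50) where
  s_refl: "P \<equiv>\<^sub>s P"
| s_sym: "P \<equiv>\<^sub>s Q \<Longrightarrow> Q \<equiv>\<^sub>s P"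
| s_trans: "P \<equiv>\<^sub>s Q \<Longrightarrow> Q \<equiv>\<^sub>s R \<Longrightarrow> P \<equiv>\<^sub>s R"
| s_par: "P \<equiv>\<^sub>s P' \<Longrightarrow> Q \<equiv>\<^sub>s Q' \<Longrightarrow> Par P Q \<equiv>\<^sub>s Par P' Q'"
| s_rep: "P \<equiv>\<^sub>s P' \<Longrightarrow> Rep P \<equiv>\<^sub>s Rep P'"
| s_new: "P \<equiv>\<^sub>s P' \<Longrightarrow> New n P \<equiv>\<^sub>s New n P'"
| s_case: "P \<equiv>\<^sub>s P' \<Longrightarrow> Case p P \<equiv>\<^sub>s Case p P'"
| s_alpha: "a \<notin> fnp P \<Longrightarrow> b \<notin> fnp P \<Longrightarrow> P \<equiv>\<^sub>s proc_swap a b P"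
| s_par_zero: "Par P Zero \<equiv>\<^sub>s P"
| s_par_comm: "Par P Q \<equiv>\<^sub>s Par Q P"
| s_par_assoc: "Par P (Par Q R) \<equiv>\<^sub>s Par (Par P Q) R"
| s_new_zero: "New n Zero \<equiv>\<^sub>s Zero"
| s_new_new: "New n (New m P) \<equiv>\<^sub>s New m (New n P)"
| s_rep_unf: "Rep P \<equiv>\<^sub>s Par P (Rep P)"
| s_extr: "n \<notin> fnp P \<Longrightarrow> Par P (New n Q) \<equiv>\<^sub>s New n (Par P Q)"

inductive red :: "proc \<Rightarrow> proc \<Rightarrow> bool" (infix "\<longmapsto>" 50) where
  r_comm: "unify p q = Some (\<sigma>, \<rho>) \<Longrightarrow>
             Par (Case p P) (Case q Q) \<longmapsto> Par (psub \<sigma> P) (psub \<rho> Q)"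
| r_par: "P \<longmapsto> P' \<Longrightarrow> Par P Q \<longmapsto> Par P' Q"
| r_new: "P \<longmapsto> P' \<Longrightarrow> New n P \<longmapsto> New n P'"
| r_struct: "P \<equiv>\<^sub>s P0 \<Longrightarrow> P0 \<longmapsto> Q0 \<Longrightarrow> Q0 \<equiv>\<^sub>s Q \<Longrightarrow> P \<longmapsto> Q"

fun news :: "name list \<Rightarrow> proc \<Rightarrow> proc" where
  "news [] P = P"
| "news (n # ns) P = New n (news ns P)"

definition barb :: "proc \<Rightarrow> name set \<Rightarrow> bool" where
  "barb P M \<longleftrightarrow> (\<exists>ns p P' P''. P \<equiv>\<^sub>s news ns (Par (Case p P') P'') \<and>
                      pn p \<inter> set ns = {} \<and> M = fn p - set ns)"

datatype ctx =
    Hole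
  | CParL ctx proc
  | CParR proc ctx
  | CRep ctx
  | CNew name ctx
  | CCase pat ctx

fun fill :: "ctx \<Rightarrow> proc \<Rightarrow> proc" where
  "fill Hole P = P"
| "fill (CParL C Q) P = Par (fill C P) Q"
| "fill (CParR Q C) P = Par Q (fill C P)"
| "fill (CRep C) P = Rep (fill C P)"
| "fill (CNew n C) P = New n (fill C P)"
| "fill (CCase p C) P = Case p (fill C P)"

fun wf_ctx :: "ctx \<Rightarrow> bool" where
  "wf_ctx Hole = True"
| "wf_ctx (CParL C Q) = (wf_ctx C \<and> wf_proc Q)"
| "wf_ctx (CParR Q C) = (wf_proc Q \<and> wf_ctx C)"
| "wf_ctx (CRep C) = wf_ctx C"
| "wf_ctx (CNew n C) = wf_ctx C"
| "wf_ctx (CCase p C) = (wf_pat p \<and> wf_ctx C)"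

definition on_procs :: "(proc \<Rightarrow> proc \<Rightarrow> bool) \<Rightarrow> bool" where
  "on_procs R \<longleftrightarrow> (\<forall>P Q. R P Q \<longrightarrow> wf_proc P \<and> wf_proc Q)"

definition barb_preserving :: "(proc \<Rightarrow> proc \<Rightarrow> bool) \<Rightarrow> bool" where
  "barb_preserving R \<longleftrightarrow> (\<forall>P Q M. R P Q \<longrightarrow> barb P M \<longrightarrow> barb Q M)"

definition reduction_closed :: "(proc \<Rightarrow> proc \<Rightarrow> bool) \<Rightarrow> bool" where
  "reduction_closed R \<longleftrightarrow> (\<forall>P Q P'. R P Q \<longrightarrow> P \<longmapsto> P' \<longrightarrow> (\<exists>Q'. Q \<longmapsto> Q' \<and> R P' Q'))"

definition context_closed :: "(proc \<Rightarrow> proc \<Rightarrow> bool) \<Rightarrow> bool" where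
  "context_closed R \<longleftrightarrow> (\<forall>P Q C. R P Q \<longrightarrow> wf_ctx C \<longrightarrow> R (fill C P) (fill C Q))"

text \<open>Barbed congruence: the largest (= union of all) symmetric, barb preserving,
  reduction closed and context closed relation on processes.\<close>
definition barbed_cong :: "proc \<Rightarrow> proc \<Rightarrow> bool" (infix "\<simeq>" 50) where
  "P \<simeq> Q \<longleftrightarrow> (\<exists>R. on_procs R \<and> symp R \<and> barb_preserving R \<and>
                    reduction_closed R \<and> context_closed R \<and> R P Q)"

end

theory Submission
  imports Defs "HOL-Library.Multiset"
begin


lemma finite_bn[simp]: "finite (bn p)" by (simp add: bn_def)
lemma finite_vn[simp]: "finite (vn p)" by (induction p) auto
lemma finite_pn[simp]: "finite (pn p)" by (induction p) auto
lemma finite_fn[simp]: "finite (fn p)" by (simp add: fn_def)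
lemma finite_fnp[simp]: "finite (fnp P)" by (induction P) auto

lemma bn_simps[simp]: "bn (PBind x) = {x}" "bn (PVar x) = {}" "bn (PProt x) = {}"
  "bn (PComp p q) = bn p \<union> bn q" by (auto simp: bn_def)
lemma fn_simps[simp]: "fn (PBind x) = {}" "fn (PVar x) = {x}" "fn (PProt x) = {x}"
  "fn (PComp p q) = fn p \<union> fn q" by (auto simp: fn_def)

lemma finite_rnames: "is_subst \<sigma> \<Longrightarrow> finite (rnames \<sigma>)"
  unfolding rnames_def is_subst_def by (auto intro!: finite_ran)

lemma fresh_notin: "finite X \<Longrightarrow> fresh X \<notin> X"
  unfolding fresh_def by (metis LeastI_ex ex_new_if_finite infinite_UNIV_nat)

lemma fresh_list_props: "finite X \<Longrightarrow> length (fresh_list n X) = n \<and> distinct (fresh_list n X) \<and> set (fresh_list n X) \<inter> X = {}"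
proof (induction n arbitrary: X)
  case 0 then show ?case by simp
next
  case (Suc n)
  have "finite (insert (fresh X) X)" using Suc.prems by simp
  from Suc.IH[OF this] fresh_notin[OF Suc.prems] show ?case by auto
qed


fun pat_ren :: "(name \<Rightarrow> name) \<Rightarrow> pat \<Rightarrow> pat" where
  "pat_ren f (PBind x) = PBind (f x)"
| "pat_ren f (PVar x) = PVar (f x)"
| "pat_ren f (PProt x) = PProt (f x)"
| "pat_ren f (PComp p q) = PComp (pat_ren f p) (pat_ren f q)"

fun proc_ren :: "(name \<Rightarrow> name) \<Rightarrow> proc \<Rightarrow> proc" where
  "proc_ren f Zero = Zero"
| "proc_ren f (Par P Q) = Par (proc_ren f P) (proc_ren f Q)"
| "proc_ren f (Rep P) = Rep (proc_ren f P)"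
| "proc_ren f (New x P) = New (f x) (proc_ren f P)"
| "proc_ren f (Case p P) = Case (pat_ren f p) (proc_ren f P)"

lemma pat_swap_ren: "pat_swap a b p = pat_ren (swapn a b) p" by (induction p) auto
lemma proc_swap_ren: "proc_swap a b P = proc_ren (swapn a b) P" by (induction P) (auto simp: pat_swap_ren)

lemma swapn_inv[simp]: "swapn a b (swapn a b x) = x" by (auto simp: swapn_def)
lemma swapn_other[simp]: "x \<noteq> a \<Longrightarrow> x \<noteq> b \<Longrightarrow> swapn a b x = x" by (auto simp: swapn_def)
lemma swapn_a[simp]: "swapn a b a = b" and swapn_b[simp]: "swapn a b b = a" by (auto simp: swapn_def)
lemma inj_swapn[simp]: "inj (swapn a b)" by (metis injI swapn_inv)
lemma bij_swapn[simp]: "bij (swapn a b)" by (metis bijI' swapn_inv)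

lemma pat_ren_comp: "pat_ren f (pat_ren g p) = pat_ren (f \<circ> g) p" by (induction p) auto
lemma proc_ren_comp: "proc_ren f (proc_ren g P) = proc_ren (f \<circ> g) P" by (induction P) (auto simp: pat_ren_comp comp_def)
lemma pat_ren_id'[simp]: "pat_ren (\<lambda>x. x) p = p" by (induction p) auto
lemma proc_ren_id'[simp]: "proc_ren (\<lambda>x. x) P = P" by (induction P) auto
lemma pat_ren_id[simp]: "pat_ren id p = p" by (simp add: id_def)
lemma proc_ren_id[simp]: "proc_ren id P = P" by (simp add: id_def)

lemma bnl_ren[simp]: "bnl (pat_ren f p) = map f (bnl p)" by (induction p) auto
lemma bn_ren[simp]: "bn (pat_ren f p) = f ` bn p" by (simp add: bn_def)
lemma vn_ren[simp]: "vn (pat_ren f p) = f ` vn p" by (induction p) auto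
lemma pn_ren[simp]: "pn (pat_ren f p) = f ` pn p" by (induction p) auto
lemma fn_ren[simp]: "fn (pat_ren f p) = f ` fn p" by (auto simp: fn_def)

lemma fnp_ren: "inj f \<Longrightarrow> fnp (proc_ren f P) = f ` fnp P"
  by (induction P) (auto simp: image_Un image_set_diff)

lemma wf_pat_ren: "inj f \<Longrightarrow> wf_pat p \<Longrightarrow> wf_pat (pat_ren f p)"
  unfolding wf_pat_def by (auto simp: distinct_map inj_on_def fn_def[symmetric] inj_image_mem_iff)

lemma wf_proc_ren: "inj f \<Longrightarrow> wf_proc P \<Longrightarrow> wf_proc (proc_ren f P)"
  by (induction P) (auto simp: wf_pat_ren)

lemma pat_ren_cong: "(\<And>x. x \<in> bn p \<union> fn p \<Longrightarrow> f x = g x) \<Longrightarrow> pat_ren f p = pat_ren g p"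
  by (induction p) auto

lemma protect_ren: "pat_ren f (protect q) = protect (pat_ren f q)"
  by (induction q rule: protect.induct) auto

lemma communicable_ren: "communicable q \<Longrightarrow> communicable (pat_ren f q)"
  by (simp add: communicable_def)

lemma communicable_simps[simp]: "communicable (PVar x)" "\<not> communicable (PBind x)"
  "\<not> communicable (PProt x)" "communicable (PComp p q) \<longleftrightarrow> communicable p \<and> communicable q"
  by (auto simp: communicable_def)

lemma communicable_bnl: "communicable q \<Longrightarrow> bnl q = []"
  by (simp add: communicable_def bn_def)

fun swaps :: "(name \<times> name) list \<Rightarrow> name \<Rightarrow> name" where
  "swaps [] = id"
| "swaps ((a,b) # L) = swapn a b \<circ> swaps L"

lemma bij_swaps: "bij (swaps L)"
proof (induction L rule: swaps.induct)
  case 1 show ?case using bij_id by (simp add: id_def)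
next
  case (2 a b L)
  have "bij (swapn a b \<circ> swaps L)" by (rule bij_comp[OF 2 bij_swapn])
  then show ?case by (simp only: swaps.simps)
qed

lemma inj_swaps[simp]: "inj (swaps L)" using bij_swaps bij_is_inj by blast

lemma swaps_fix: "(\<forall>(a,b)\<in>set L. x \<noteq> a \<and> x \<noteq> b) \<Longrightarrow> swaps L x = x"
  by (induction L rule: swaps.induct) auto

lemma swaps_fix_set: "(\<forall>(a,b)\<in>set L. a \<notin> S \<and> b \<notin> S) \<Longrightarrow> x \<in> S \<Longrightarrow> swaps L x = x"
  by (rule swaps_fix) auto

lemma swaps_notin: "(\<forall>(a,b)\<in>set L. a \<notin> S \<and> b \<notin> S) \<Longrightarrow> x \<notin> S \<Longrightarrow> swaps L x \<notin> S"
proof -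
  assume a: "\<forall>(a,b)\<in>set L. a \<notin> S \<and> b \<notin> S" and x: "x \<notin> S"
  show ?thesis
  proof
    assume "swaps L x \<in> S"
    then have "swaps L (swaps L x) = swaps L x" using swaps_fix_set[OF a] by blast
    then have "swaps L x = x" using inj_swaps by (meson injD)
    with \<open>swaps L x \<in> S\<close> x show False by simp
  qed
qed

lemma perm_exists:
  assumes "length us = length us'" "distinct us" "distinct us'" "set us \<inter> S = {}" "set us' \<inter> S = {}"
  shows "\<exists>L. (\<forall>(a,b)\<in>set L. a \<notin> S \<and> b \<notin> S) \<and> map (swaps L) us = us'"
  using assms
proof (induction us arbitrary: us')
  case Nil then show ?case by (intro exI[of _ "[]"]) auto
next
  case (Cons u us)
  then obtain u' us1 where us': "us' = u' # us1" by (cases us') auto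
  with Cons obtain L1 where L1: "\<forall>(a,b)\<in>set L1. a \<notin> S \<and> b \<notin> S" "map (swaps L1) us = us1" by auto
  let ?L = "(swaps L1 u, u') # L1"
  have u: "u \<notin> S" "u' \<notin> S" using Cons.prems us' by auto
  have "swaps L1 u \<notin> S" using swaps_notin[OF L1(1) u(1)] .
  moreover have "map (swaps ?L) us = us1"
  proof -
    have "\<And>v. v \<in> set us \<Longrightarrow> swapn (swaps L1 u) u' (swaps L1 v) = swaps L1 v"
    proof -
      fix v assume v: "v \<in> set us"
      have "v \<noteq> u" using Cons.prems v by auto
      then have "swaps L1 v \<noteq> swaps L1 u" by (meson inj_swaps injD)
      moreover have "swaps L1 v \<in> set us1" using L1(2) v by auto
      then have "swaps L1 v \<noteq> u'" using Cons.prems us' by auto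
      ultimately show "swapn (swaps L1 u) u' (swaps L1 v) = swaps L1 v" by simp
    qed
    then show ?thesis using L1(2) by (auto intro!: map_idI simp del: swapn_other)
  qed
  ultimately show ?case using L1 u us' by (intro exI[of _ ?L]) auto
qed


lemma fnp_swap_fix: "a \<notin> fnp P \<Longrightarrow> b \<notin> fnp P \<Longrightarrow> fnp (proc_ren (swapn a b) P) = fnp P"
proof -
  assume ab: "a \<notin> fnp P" "b \<notin> fnp P"
  have "fnp (proc_ren (swapn a b) P) = swapn a b ` fnp P" by (simp add: fnp_ren)
  also have "\<dots> = id ` fnp P" by (rule image_cong) (use ab in \<open>auto simp: swapn_def\<close>)
  also have "\<dots> = fnp P" by simp
  finally show ?thesis .
qed

lemma scong_fnp: "P \<equiv>\<^sub>s Q \<Longrightarrow> fnp P = fnp Q"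
  by (induction rule: scong.induct) (auto simp: proc_swap_ren fnp_swap_fix)

lemma wf_swap_iff: "wf_proc (proc_ren (swapn a b) P) = wf_proc P"
proof
  have inv: "proc_ren (swapn a b) (proc_ren (swapn a b) P) = P"
    by (simp add: proc_ren_comp comp_def)
  show "wf_proc (proc_ren (swapn a b) P) \<Longrightarrow> wf_proc P"
    using wf_proc_ren[OF inj_swapn, of "proc_ren (swapn a b) P" a b] inv by simp
  show "wf_proc P \<Longrightarrow> wf_proc (proc_ren (swapn a b) P)" by (rule wf_proc_ren[OF inj_swapn])
qed

lemma scong_wf: "P \<equiv>\<^sub>s Q \<Longrightarrow> wf_proc P = wf_proc Q"
  by (induction rule: scong.induct) (auto simp: proc_swap_ren wf_swap_iff)

lemma alpha_swaps: "(\<forall>(a,b)\<in>set L. a \<notin> fnp X \<and> b \<notin> fnp X) \<Longrightarrow> X \<equiv>\<^sub>s proc_ren (swaps L) X"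
proof (induction L rule: swaps.induct)
  case 1 then show ?case by (simp add: s_refl)
next
  case (2 a b L)
  let ?Y = "proc_ren (swaps L) X"
  have XY: "X \<equiv>\<^sub>s ?Y" using 2 by auto
  have "fnp ?Y = fnp X" using scong_fnp[OF XY] by simp
  then have "?Y \<equiv>\<^sub>s proc_swap a b ?Y" using 2 by (intro s_alpha) auto
  then have "?Y \<equiv>\<^sub>s proc_ren (swaps ((a,b)#L)) X" by (simp add: proc_swap_ren proc_ren_comp)
  with XY show ?case by (rule s_trans)
qed

lemmas scong_trans[trans] = s_trans

lemma new_vac: "n \<notin> fnp X \<Longrightarrow> New n X \<equiv>\<^sub>s X"
proof -
  assume n: "n \<notin> fnp X"
  have "New n X \<equiv>\<^sub>s New n (Par X Zero)" by (intro s_new s_sym[OF s_par_zero])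
  also have "New n (Par X Zero) \<equiv>\<^sub>s Par X (New n Zero)" using n by (intro s_sym[OF s_extr])
  also have "Par X (New n Zero) \<equiv>\<^sub>s Par X Zero" by (intro s_par s_refl s_new_zero)
  also have "Par X Zero \<equiv>\<^sub>s X" by (rule s_par_zero)
  finally show ?thesis .
qed


definition Nm :: "subst \<Rightarrow> name set \<Rightarrow> name set" where
  "Nm \<sigma> A = (\<Union>z\<in>A. case \<sigma> z of None \<Rightarrow> {} | Some v \<Rightarrow> vn v \<union> pn v)"

lemma Nm_mono: "A \<subseteq> B \<Longrightarrow> Nm \<sigma> A \<subseteq> Nm \<sigma> B" unfolding Nm_def by auto
lemma Nm_union: "Nm \<sigma> (A \<union> B) = Nm \<sigma> A \<union> Nm \<sigma> B" unfolding Nm_def by auto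
lemma Nm_rnames: "Nm \<sigma> A \<subseteq> rnames \<sigma>"
  unfolding Nm_def rnames_def by (auto split: option.splits; meson ranI)
lemma Nm_finite: "finite A \<Longrightarrow> finite (Nm \<sigma> A)"
  unfolding Nm_def by (auto split: option.splits)

lemma is_subst_comm: "is_subst \<sigma> \<Longrightarrow> \<sigma> z = Some v \<Longrightarrow> communicable v"
  unfolding is_subst_def by (auto intro: ranI)

lemma is_subst_upd: "is_subst \<sigma> \<Longrightarrow> communicable v \<Longrightarrow> is_subst (\<sigma>(x \<mapsto> v))"
  unfolding is_subst_def by (auto simp: ran_def)

lemma is_subst_empty[simp]: "is_subst Map.empty" unfolding is_subst_def by simp

lemma is_subst_add: "is_subst \<sigma> \<Longrightarrow> is_subst \<rho> \<Longrightarrow> is_subst (\<sigma> ++ \<rho>)"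
  unfolding is_subst_def by (auto simp: ran_def map_add_Some_iff)

lemma is_subst_map_of: "length xs = length vs \<Longrightarrow> (\<forall>v\<in>set vs. communicable v) \<Longrightarrow> is_subst (map_of (zip xs vs))"
  unfolding is_subst_def by (auto simp: ran_def finite_dom_map_of dest!: map_of_SomeD set_zip_rightD)

lemma is_subst_map_of_var: "length xs = length ys \<Longrightarrow> is_subst (map_of (zip xs (map PVar ys)))"
  by (rule is_subst_map_of) auto

lemma bnl_protect: "bnl (protect q) = bnl q" by (induction q rule: protect.induct) auto
lemma vn_protect: "vn (protect q) = {}" by (induction q rule: protect.induct) auto
lemma pn_protect: "pn (protect q) = vn q \<union> pn q" by (induction q rule: protect.induct) auto

lemma bnl_patsub: "is_subst \<sigma> \<Longrightarrow> bnl (patsub \<sigma> p) = bnl p"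
  by (induction p) (auto split: option.splits simp: bnl_protect dest: is_subst_comm communicable_bnl)

lemma fn_patsub: "is_subst \<sigma> \<Longrightarrow> vn (patsub \<sigma> p) \<union> pn (patsub \<sigma> p) \<subseteq> (fn p - dom \<sigma>) \<union> Nm \<sigma> (fn p)"
  by (induction p) (auto split: option.splits simp: vn_protect pn_protect Nm_def fn_def)

definition rn :: "(name \<rightharpoonup> name) \<Rightarrow> name \<Rightarrow> name" where
  "rn r x = (case r x of Some y \<Rightarrow> y | None \<Rightarrow> x)"

lemma bnl_rename_bn: "bnl (rename_bn r p) = map (rn r) (bnl p)"
  by (induction p) (auto simp: rn_def)
lemma vn_rename_bn[simp]: "vn (rename_bn r p) = vn p" by (induction p) auto
lemma pn_rename_bn[simp]: "pn (rename_bn r p) = pn p" by (induction p) auto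

lemma rename_bn_nobn: "bnl q = [] \<Longrightarrow> rename_bn r q = q"
  by (induction q) auto

lemma map_rn_zip: "length xs = length ys \<Longrightarrow> distinct xs \<Longrightarrow> map (rn (map_of (zip xs ys))) xs = ys"
proof (induction xs ys rule: list_induct2)
  case Nil then show ?case by simp
next
  case (Cons x xs y ys)
  then have "map (rn (map_of (zip (x#xs) (y#ys)))) xs = map (rn (map_of (zip xs ys))) xs"
    by (auto intro!: map_cong simp: rn_def)
  moreover have "rn (map_of (zip (x#xs) (y#ys))) x = y" by (simp add: rn_def)
  moreover have "map (rn (map_of (zip (x#xs) (y#ys)))) (x#xs) = rn (map_of (zip (x#xs) (y#ys))) x # map (rn (map_of (zip (x#xs) (y#ys)))) xs" by (simp only: list.map)
  moreover have "map (rn (map_of (zip xs ys))) xs = ys" using Cons by simp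
  ultimately show ?case by metis
qed

lemma map_of_zip_in: "length xs = length ys \<Longrightarrow> distinct xs \<Longrightarrow> i < length xs \<Longrightarrow> map_of (zip xs ys) (xs ! i) = Some (ys ! i)"
proof (induction xs ys arbitrary: i rule: list_induct2)
  case Nil then show ?case by simp
next
  case (Cons x xs y ys) then show ?case
    by (cases i) (auto simp: nth_mem)
qed


lemma Nm_upd: "Nm (\<sigma>(x \<mapsto> PVar y)) A \<subseteq> {y} \<union> Nm \<sigma> (A - {x})"
  unfolding Nm_def by (auto split: option.splits if_splits)

lemma map_of_zip_None: "length xs = length vs \<Longrightarrow> map_of (zip xs vs) z = None \<longleftrightarrow> z \<notin> set xs"
  by (simp add: map_of_zip_is_None)

lemma map_of_zip_Some: "map_of (zip xs vs) z = Some v \<Longrightarrow> v \<in> set vs"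
  by (auto dest: map_of_SomeD set_zip_rightD)

lemma add_zip_cases: "length xs = length ys \<Longrightarrow>
   (z \<notin> set xs \<and> (\<sigma> ++ map_of (zip xs (map PVar ys))) z = \<sigma> z) \<or>
   (\<exists>y\<in>set ys. (\<sigma> ++ map_of (zip xs (map PVar ys))) z = Some (PVar y))"
proof (cases "z \<in> set xs")
  case True
  assume l: "length xs = length ys"
  have "map_of (zip xs (map PVar ys)) z \<noteq> None"
    using map_of_zip_None[of xs "map PVar ys" z] True l by simp
  then obtain v where v: "map_of (zip xs (map PVar ys)) z = Some v" by blast
  then have "v \<in> PVar ` set ys" using map_of_zip_Some by fastforce
  with v show ?thesis by (auto simp: map_add_def)
next
  case False
  assume l: "length xs = length ys"
  then have "map_of (zip xs (map PVar ys)) z = None" using False map_of_zip_None[of xs "map PVar ys" z] by simp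
  with False show ?thesis by (auto simp: map_add_def)
qed

lemma Nm_add: "length xs = length ys \<Longrightarrow> Nm (\<sigma> ++ map_of (zip xs (map PVar ys))) A \<subseteq> set ys \<union> Nm \<sigma> (A - set xs)"
proof
  fix n assume l: "length xs = length ys" and n: "n \<in> Nm (\<sigma> ++ map_of (zip xs (map PVar ys))) A"
  from n obtain z where z0: "z \<in> A" "n \<in> (case (\<sigma> ++ map_of (zip xs (map PVar ys))) z of None \<Rightarrow> {} | Some v \<Rightarrow> vn v \<union> pn v)"
    unfolding Nm_def by blast
  then obtain v where z: "z \<in> A" "(\<sigma> ++ map_of (zip xs (map PVar ys))) z = Some v" "n \<in> vn v \<union> pn v"
    by (cases "(\<sigma> ++ map_of (zip xs (map PVar ys))) z") auto
  from add_zip_cases[OF l, of z \<sigma>] show "n \<in> set ys \<union> Nm \<sigma> (A - set xs)"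
  proof
    assume "z \<notin> set xs \<and> (\<sigma> ++ map_of (zip xs (map PVar ys))) z = \<sigma> z"
    then have "\<sigma> z = Some v" "z \<in> A - set xs" using z by auto
    then show ?thesis using z(3) unfolding Nm_def by (auto intro!: bexI[of _ z])
  next
    assume "\<exists>y\<in>set ys. (\<sigma> ++ map_of (zip xs (map PVar ys))) z = Some (PVar y)"
    then show ?thesis using z by auto
  qed
qed

lemma dom_add_zip: "length xs = length ys \<Longrightarrow> dom (\<sigma> ++ map_of (zip xs ys)) = dom \<sigma> \<union> set xs"
  by (auto simp: dom_map_add)

lemma fresh_case:
  assumes "finite X"
  shows "length (fresh_list n X) = n" "distinct (fresh_list n X)" "set (fresh_list n X) \<inter> X = {}"
  using fresh_list_props[OF assms] by auto

lemma wf_pat_distinct: "wf_pat p \<Longrightarrow> distinct (bnl p)" by (simp add: wf_pat_def)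
lemma wf_pat_disj: "wf_pat p \<Longrightarrow> bn p \<inter> fn p = {}" by (simp add: wf_pat_def)

lemma fnp_psub: "wf_proc P \<Longrightarrow> is_subst \<sigma> \<Longrightarrow> fnp (psub \<sigma> P) \<subseteq> (fnp P - dom \<sigma>) \<union> Nm \<sigma> (fnp P)"
proof (induction P arbitrary: \<sigma>)
  case Zero then show ?case by simp
next
  case (Par P1 P2)
  then have "fnp (psub \<sigma> P1) \<subseteq> (fnp P1 - dom \<sigma>) \<union> Nm \<sigma> (fnp P1)"
    "fnp (psub \<sigma> P2) \<subseteq> (fnp P2 - dom \<sigma>) \<union> Nm \<sigma> (fnp P2)" by auto
  then show ?case by (auto simp: Nm_union)
next
  case (Rep P) then show ?case by simp
next
  case (New x P)
  define y where "y = fresh (fnp (New x P) \<union> dom \<sigma> \<union> rnames \<sigma>)"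
  define \<sigma>1 where "\<sigma>1 = \<sigma>(x \<mapsto> PVar y)"
  have is1: "is_subst \<sigma>1" using New.prems unfolding \<sigma>1_def by (intro is_subst_upd) auto
  have IH0: "fnp (psub \<sigma>1 P) \<subseteq> (fnp P - dom \<sigma>1) \<union> Nm \<sigma>1 (fnp P)"
    using New.IH[OF _ is1] New.prems by simp
  have d: "dom \<sigma>1 = insert x (dom \<sigma>)" by (simp add: \<sigma>1_def)
  have n: "Nm \<sigma>1 (fnp P) \<subseteq> {y} \<union> Nm \<sigma> (fnp P - {x})" unfolding \<sigma>1_def by (rule Nm_upd)
  have "Nm \<sigma> (fnp P - {x}) = Nm \<sigma> (fnp (New x P))" by simp
  have "psub \<sigma> (New x P) = New y (psub \<sigma>1 P)" by (simp add: y_def Let_def \<sigma>1_def)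
  then show ?case using IH0 d n by auto
next
  case (Case p P)
  define xs where "xs = bnl p"
  define F where "F = fnp (Case p P) \<union> dom \<sigma> \<union> rnames \<sigma>"
  define ys where "ys = fresh_list (length xs) F"
  have finF: "finite F" using Case.prems finite_rnames by (auto simp: F_def is_subst_def)
  have ys: "length ys = length xs" "distinct ys" "set ys \<inter> F = {}" using fresh_case[OF finF] by (auto simp: ys_def)
  define \<sigma>' where "\<sigma>' = \<sigma> ++ map_of (zip xs (map PVar ys))"
  have is1: "is_subst \<sigma>'" unfolding \<sigma>'_def
    using Case.prems ys by (intro is_subst_add is_subst_map_of_var) auto
  define p' where "p' = rename_bn (map_of (zip xs ys)) (patsub \<sigma> p)"
  have wfp: "wf_pat p" using Case.prems by simp
  have bnp': "bnl p' = ys" unfolding p'_def using bnl_patsub[OF Case.prems(2)] bnl_rename_bn map_rn_zip ys wfp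
    by (simp add: xs_def wf_pat_distinct)
  have eq: "psub \<sigma> (Case p P) = Case p' (psub \<sigma>' P)"
    by (simp add: Let_def xs_def F_def ys_def \<sigma>'_def p'_def)
  have IH: "fnp (psub \<sigma>' P) \<subseteq> (fnp P - dom \<sigma>') \<union> Nm \<sigma>' (fnp P)"
    using Case.IH[OF _ is1] Case.prems by simp
  have "Nm \<sigma>' (fnp P) \<subseteq> set ys \<union> Nm \<sigma> (fnp P - set xs)" unfolding \<sigma>'_def using ys by (intro Nm_add) auto
  moreover have "dom \<sigma>' = dom \<sigma> \<union> set xs" unfolding \<sigma>'_def using ys by (auto simp: dom_add_zip)
  ultimately have b: "fnp (psub \<sigma>' P) - set ys \<subseteq> (fnp P - bn p - dom \<sigma>) \<union> Nm \<sigma> (fnp P - bn p)"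
    using IH by (auto simp: xs_def bn_def)
  have fp': "fn p' \<subseteq> (fn p - dom \<sigma>) \<union> Nm \<sigma> (fn p)"
    using fn_patsub[OF Case.prems(2), of p] by (simp add: p'_def fn_def)
  have "fnp (Case p' (psub \<sigma>' P)) \<subseteq> (fn p - dom \<sigma>) \<union> Nm \<sigma> (fn p) \<union> (fnp P - bn p - dom \<sigma>) \<union> Nm \<sigma> (fnp P - bn p)"
    using b fp' bnp' by (auto simp: bn_def)
  then show ?case using eq Nm_mono[of "fn p" "fnp (Case p P)" \<sigma>] Nm_mono[of "fnp P - bn p" "fnp (Case p P)" \<sigma>]
    by auto
qed

lemma wf_psub: "wf_proc P \<Longrightarrow> is_subst \<sigma> \<Longrightarrow> wf_proc (psub \<sigma> P)"
proof (induction P arbitrary: \<sigma>)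
  case (New x P)
  define y where "y = fresh (fnp (New x P) \<union> dom \<sigma> \<union> rnames \<sigma>)"
  define \<sigma>1 where "\<sigma>1 = \<sigma>(x \<mapsto> PVar y)"
  have is1: "is_subst \<sigma>1" using New.prems unfolding \<sigma>1_def by (intro is_subst_upd) auto
  have "psub \<sigma> (New x P) = New y (psub \<sigma>1 P)" by (simp add: y_def Let_def \<sigma>1_def)
  then show ?case using New.IH[OF _ is1] New.prems by simp
next
  case (Case p P)
  define xs where "xs = bnl p"
  define F where "F = fnp (Case p P) \<union> dom \<sigma> \<union> rnames \<sigma>"
  define ys where "ys = fresh_list (length xs) F"
  have finF: "finite F" using Case.prems finite_rnames by (auto simp: F_def is_subst_def)
  have ys: "length ys = length xs" "distinct ys" "set ys \<inter> F = {}" using fresh_case[OF finF] by (auto simp: ys_def)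
  define \<sigma>' where "\<sigma>' = \<sigma> ++ map_of (zip xs (map PVar ys))"
  have is1: "is_subst \<sigma>'" unfolding \<sigma>'_def
    using Case.prems ys by (intro is_subst_add is_subst_map_of_var) auto
  define p' where "p' = rename_bn (map_of (zip xs ys)) (patsub \<sigma> p)"
  have wfp: "wf_pat p" using Case.prems by simp
  have bnp': "bnl p' = ys" unfolding p'_def using bnl_patsub[OF Case.prems(2)] bnl_rename_bn map_rn_zip ys wfp
    by (simp add: xs_def wf_pat_distinct)
  have eq: "psub \<sigma> (Case p P) = Case p' (psub \<sigma>' P)"
    by (simp add: Let_def xs_def F_def ys_def \<sigma>'_def p'_def)
  have fp': "fn p' \<subseteq> (fn p - dom \<sigma>) \<union> Nm \<sigma> (fn p)"
    using fn_patsub[OF Case.prems(2), of p] by (simp add: p'_def fn_def)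
  have "fn p' \<subseteq> F" using fp' Nm_rnames[of \<sigma> "fn p"] by (auto simp: F_def)
  then have "wf_pat p'" using bnp' ys unfolding wf_pat_def bn_def by auto
  then show ?case using eq Case is1 by simp
qed auto


definition cond :: "subst \<Rightarrow> subst \<Rightarrow> (name \<Rightarrow> name) \<Rightarrow> (name \<Rightarrow> name) \<Rightarrow> name set \<Rightarrow> bool" where
  "cond \<sigma> \<sigma>' f g A \<longleftrightarrow> (\<forall>z\<in>A. case \<sigma> z of None \<Rightarrow> \<sigma>' (f z) = None \<and> g z = f z
                                  | Some v \<Rightarrow> \<sigma>' (f z) = Some (pat_ren g v))"

lemma rnames_in: "\<sigma> w = Some v \<Longrightarrow> vn v \<union> pn v \<subseteq> rnames \<sigma>"
  unfolding rnames_def by (auto intro: ranI)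

lemma cond_key: "cond \<sigma> \<sigma>' f g A \<Longrightarrow> g ` ((A - dom \<sigma>) \<union> Nm \<sigma> A) \<subseteq> f ` A \<union> rnames \<sigma>'"
proof
  fix m assume c: "cond \<sigma> \<sigma>' f g A" and m: "m \<in> g ` ((A - dom \<sigma>) \<union> Nm \<sigma> A)"
  then obtain n where n: "m = g n" "n \<in> (A - dom \<sigma>) \<union> Nm \<sigma> A" by auto
  show "m \<in> f ` A \<union> rnames \<sigma>'"
  proof (cases "n \<in> A - dom \<sigma>")
    case True
    then have "\<sigma> n = None" by auto
    then have "g n = f n" using c True unfolding cond_def by force
    then show ?thesis using n True by auto
  next
    case False
    then have "n \<in> Nm \<sigma> A" using n by auto
    then obtain z where z: "z \<in> A" "n \<in> (case \<sigma> z of None \<Rightarrow> {} | Some v \<Rightarrow> vn v \<union> pn v)"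
      unfolding Nm_def by blast
    then obtain v where v: "\<sigma> z = Some v" "n \<in> vn v \<union> pn v" by (cases "\<sigma> z") auto
    then have "\<sigma>' (f z) = Some (pat_ren g v)" using c z unfolding cond_def by force
    moreover have "g n \<in> vn (pat_ren g v) \<union> pn (pat_ren g v)" using v by auto
    ultimately show ?thesis using rnames_in n by blast
  qed
qed

lemma pat_ren_fix: "(\<And>n. n \<in> vn q \<union> pn q \<union> bn q \<Longrightarrow> h n = n) \<Longrightarrow> pat_ren h q = q"
  by (induction q) auto

lemma cond_tau:
  assumes c: "cond \<sigma> \<sigma>' f g A" and s: "is_subst \<sigma>"
    and t: "\<And>n. n \<in> g ` ((A - dom \<sigma>) \<union> Nm \<sigma> A) \<Longrightarrow> \<tau> n = n"
  shows "cond \<sigma> \<sigma>' f (\<tau> \<circ> g) A"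
  unfolding cond_def
proof
  fix z assume z: "z \<in> A"
  show "case \<sigma> z of None \<Rightarrow> \<sigma>' (f z) = None \<and> (\<tau> \<circ> g) z = f z
          | Some v \<Rightarrow> \<sigma>' (f z) = Some (pat_ren (\<tau> \<circ> g) v)"
  proof (cases "\<sigma> z")
    case None
    then have "g z = f z" "\<sigma>' (f z) = None" using c z unfolding cond_def by force+
    moreover have "\<tau> (g z) = g z" using t z None by auto
    ultimately show ?thesis using None by simp
  next
    case (Some v)
    then have e: "\<sigma>' (f z) = Some (pat_ren g v)" using c z unfolding cond_def by force
    have cv: "communicable v" using is_subst_comm[OF s Some] .
    have "pat_ren \<tau> (pat_ren g v) = pat_ren g v"
    proof (rule pat_ren_fix)
      fix n assume n: "n \<in> vn (pat_ren g v) \<union> pn (pat_ren g v) \<union> bn (pat_ren g v)"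
      have "bn v = {}" using cv by (simp add: communicable_def)
      then obtain m where "n = g m" "m \<in> vn v \<union> pn v" using n by auto
      moreover have "m \<in> Nm \<sigma> A" using calculation(2) z Some unfolding Nm_def by force
      ultimately show "\<tau> n = n" using t by auto
    qed
    then show ?thesis using Some e by (simp add: pat_ren_comp)
  qed
qed

lemma cond_mono: "cond \<sigma> \<sigma>' f g A \<Longrightarrow> B \<subseteq> A \<Longrightarrow> cond \<sigma> \<sigma>' f g B"
  unfolding cond_def by blast

lemma cond_union: "cond \<sigma> \<sigma>' f g A \<Longrightarrow> cond \<sigma> \<sigma>' f g B \<Longrightarrow> cond \<sigma> \<sigma>' f g (A \<union> B)"
  unfolding cond_def by blast

lemma cond_agree: "cond \<sigma> \<sigma>' f g A \<Longrightarrow> (\<And>z. z \<in> A \<Longrightarrow> \<sigma>1 z = \<sigma> z) \<Longrightarrow> (\<And>z. z \<in> A \<Longrightarrow> \<sigma>1' (f z) = \<sigma>' (f z))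
  \<Longrightarrow> cond \<sigma>1 \<sigma>1' f g A"
  unfolding cond_def by (auto split: option.splits)


lemma pat_eq:
  assumes s: "is_subst \<sigma>" "is_subst \<sigma>'"
    and "set (bnl q) \<subseteq> set xs" and "cond \<sigma> \<sigma>' f g (fn q)"
    and b: "\<forall>x\<in>set xs. g (rn r x) = rn r' (f x)"
  shows "pat_ren g (rename_bn r (patsub \<sigma> q)) = rename_bn r' (patsub \<sigma>' (pat_ren f q))"
  using assms(3,4)
proof (induction q)
  case (PBind x)
  then show ?case using b by (auto simp: rn_def split: option.splits)
next
  case (PVar z)
  show ?case
  proof (cases "\<sigma> z")
    case None
    then show ?thesis using PVar.prems unfolding cond_def by auto
  next
    case (Some v)
    have cv: "communicable v" using is_subst_comm[OF s(1) Some] .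
    then have "bnl v = []" by (rule communicable_bnl)
    then show ?thesis using PVar.prems Some unfolding cond_def
      by (auto simp: rename_bn_nobn)
  qed
next
  case (PProt z)
  show ?case
  proof (cases "\<sigma> z")
    case None
    then show ?thesis using PProt.prems unfolding cond_def by auto
  next
    case (Some v)
    have cv: "communicable v" using is_subst_comm[OF s(1) Some] .
    then have "bnl v = []" by (rule communicable_bnl)
    then show ?thesis using PProt.prems Some unfolding cond_def
      by (auto simp: rename_bn_nobn bnl_protect protect_ren)
  qed
next
  case (PComp q1 q2)
  then show ?case unfolding cond_def by auto
qed


lemma fresh_facts: "finite X \<Longrightarrow> fresh X \<notin> X" by (rule fresh_notin)

lemma finite_dom_subst: "is_subst \<sigma> \<Longrightarrow> finite (dom \<sigma>)" by (simp add: is_subst_def)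

lemma map_add_zip_in: "length xs = length ys \<Longrightarrow> distinct xs \<Longrightarrow> i < length xs \<Longrightarrow>
   (\<sigma> ++ map_of (zip xs (map PVar ys))) (xs ! i) = Some (PVar (ys ! i))"
  using map_of_zip_in[of xs "map PVar ys" i] by (simp add: map_add_Some_iff)

lemma map_add_zip_out: "length xs = length ys \<Longrightarrow> z \<notin> set xs \<Longrightarrow>
   (\<sigma> ++ map_of (zip xs (map PVar ys))) z = \<sigma> z"
proof -
  assume "length xs = length ys" "z \<notin> set xs"
  then have "map_of (zip xs (map PVar ys)) z = None" using map_of_zip_None[of xs "map PVar ys" z] by simp
  then show ?thesis by (simp add: map_add_def)
qed

lemma GA:
  assumes "wf_proc P" "is_subst \<sigma>" "is_subst \<sigma>'" "inj f" "inj g" "cond \<sigma> \<sigma>' f g (fnp P)"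
  shows "proc_ren g (psub \<sigma> P) \<equiv>\<^sub>s psub \<sigma>' (proc_ren f P)"
  using assms
proof (induction P arbitrary: \<sigma> \<sigma>' g)
  case Zero then show ?case by (simp add: s_refl)
next
  case (Par P1 P2)
  then show ?case by (auto intro!: s_par dest: cond_mono)
next
  case (Rep P)
  then show ?case by (auto intro!: s_rep)
next
  case (New x P)
  define A where "A = fnp P - {x}"
  define y where "y = fresh (fnp (New x P) \<union> dom \<sigma> \<union> rnames \<sigma>)"
  define \<sigma>1 where "\<sigma>1 = \<sigma>(x \<mapsto> PVar y)"
  define y' where "y' = fresh (fnp (New (f x) (proc_ren f P)) \<union> dom \<sigma>' \<union> rnames \<sigma>')"
  define \<sigma>1' where "\<sigma>1' = \<sigma>'(f x \<mapsto> PVar y')"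
  have eqL: "proc_ren g (psub \<sigma> (New x P)) = New (g y) (proc_ren g (psub \<sigma>1 P))"
    by (simp add: y_def \<sigma>1_def Let_def)
  have eqR: "psub \<sigma>' (proc_ren f (New x P)) = New y' (psub \<sigma>1' (proc_ren f P))"
    by (simp add: y'_def \<sigma>1'_def Let_def)
  have fy: "y \<notin> fnp (New x P) \<union> dom \<sigma> \<union> rnames \<sigma>" unfolding y_def
    using New.prems by (intro fresh_notin) (auto simp: finite_rnames finite_dom_subst)
  have fy': "y' \<notin> fnp (New (f x) (proc_ren f P)) \<union> dom \<sigma>' \<union> rnames \<sigma>'" unfolding y'_def
    using New.prems by (intro fresh_notin) (auto simp: finite_rnames finite_dom_subst)
  have fA: "fnp (New (f x) (proc_ren f P)) = f ` A"
    using New.prems(4) by (simp add: A_def fnp_ren image_set_diff)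
  define S where "S = g ` ((A - dom \<sigma>) \<union> Nm \<sigma> A)"
  have cA: "cond \<sigma> \<sigma>' f g A" using New.prems by (auto simp: A_def)
  have S1: "S \<subseteq> f ` A \<union> rnames \<sigma>'" unfolding S_def by (rule cond_key[OF cA])
  have y'S: "y' \<notin> S" using S1 fy' fA by auto
  have "S \<subseteq> g ` (A \<union> rnames \<sigma>)" unfolding S_def using Nm_rnames[of \<sigma> A] by auto
  moreover have "y \<notin> A \<union> rnames \<sigma>" using fy by (auto simp: A_def)
  ultimately have gyS: "g y \<notin> S" using New.prems(5)
    by (metis (no_types, lifting) in_mono inj_image_mem_iff)
  define \<tau> where "\<tau> = swapn (g y) y'"
  define g' where "g' = \<tau> \<circ> g"
  have injg': "inj g'" unfolding g'_def \<tau>_def using New.prems(5) by (simp add: inj_compose)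
  have tfix: "\<And>n. n \<in> S \<Longrightarrow> \<tau> n = n" using y'S gyS unfolding \<tau>_def by (metis swapn_other)
  have c1: "cond \<sigma> \<sigma>' f g' A" unfolding g'_def
    by (rule cond_tau[OF cA New.prems(2)]) (use tfix in \<open>auto simp: S_def\<close>)
  have c2: "cond \<sigma>1 \<sigma>1' f g' A"
  proof (rule cond_agree[OF c1])
    fix z assume "z \<in> A"
    then have "z \<noteq> x" "f z \<noteq> f x" using New.prems(4) by (auto simp: A_def inj_eq)
    then show "\<sigma>1 z = \<sigma> z" "\<sigma>1' (f z) = \<sigma>' (f z)" by (auto simp: \<sigma>1_def \<sigma>1'_def)
  qed
  have c3: "cond \<sigma>1 \<sigma>1' f g' {x}"
    unfolding cond_def by (simp add: \<sigma>1_def \<sigma>1'_def g'_def \<tau>_def)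
  have c4: "cond \<sigma>1 \<sigma>1' f g' (fnp P)"
    by (rule cond_mono[OF cond_union[OF c2 c3]]) (auto simp: A_def)
  have is1: "is_subst \<sigma>1" unfolding \<sigma>1_def using New.prems by (intro is_subst_upd) auto
  have is1': "is_subst \<sigma>1'" unfolding \<sigma>1'_def using New.prems by (intro is_subst_upd) auto
  have IH: "proc_ren g' (psub \<sigma>1 P) \<equiv>\<^sub>s psub \<sigma>1' (proc_ren f P)"
    using New.IH[OF _ is1 is1' New.prems(4) injg' c4] New.prems(1) by simp
  define Z where "Z = proc_ren g (psub \<sigma>1 P)"
  have Zg': "proc_ren g' (psub \<sigma>1 P) = proc_ren \<tau> Z" by (simp add: Z_def g'_def proc_ren_comp)
  have "fnp (psub \<sigma>1 P) \<subseteq> (fnp P - dom \<sigma>1) \<union> Nm \<sigma>1 (fnp P)"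
    using fnp_psub[OF _ is1] New.prems(1) by simp
  moreover have "Nm \<sigma>1 (fnp P) \<subseteq> {y} \<union> Nm \<sigma> A" unfolding \<sigma>1_def A_def by (rule Nm_upd)
  moreover have "dom \<sigma>1 = insert x (dom \<sigma>)" by (simp add: \<sigma>1_def)
  ultimately have "fnp (psub \<sigma>1 P) - {y} \<subseteq> (A - dom \<sigma>) \<union> Nm \<sigma> A" by (auto simp: A_def)
  then have fZ: "fnp (New (g y) Z) \<subseteq> S"
    using New.prems(5) by (auto simp: Z_def S_def fnp_ren inj_image_mem_iff)
  have "New (g y) Z \<equiv>\<^sub>s proc_swap (g y) y' (New (g y) Z)"
    by (rule s_alpha) (use fZ y'S gyS in auto)
  also have "proc_swap (g y) y' (New (g y) Z) = New y' (proc_ren \<tau> Z)"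
    by (simp add: proc_swap_ren \<tau>_def)
  also have "New y' (proc_ren \<tau> Z) \<equiv>\<^sub>s New y' (psub \<sigma>1' (proc_ren f P))"
    using IH Zg' by (auto intro: s_new)
  finally show ?case using eqL eqR by (simp add: Z_def)
next
  case (Case p P)
  have wfp: "wf_pat p" and wfP: "wf_proc P" using Case.prems by auto
  define xs where "xs = bnl p"
  have dxs: "distinct xs" using wfp by (simp add: xs_def wf_pat_distinct)
  define F where "F = fnp (Case p P) \<union> dom \<sigma> \<union> rnames \<sigma>"
  define ys where "ys = fresh_list (length xs) F"
  have finF: "finite F" using Case.prems finite_rnames by (auto simp: F_def is_subst_def)
  have ys: "length ys = length xs" "distinct ys" "set ys \<inter> F = {}" using fresh_case[OF finF] by (auto simp: ys_def)
  define \<sigma>1 where "\<sigma>1 = \<sigma> ++ map_of (zip xs (map PVar ys))"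
  define p1 where "p1 = rename_bn (map_of (zip xs ys)) (patsub \<sigma> p)"
  define p' where "p' = pat_ren f p"
  define P' where "P' = proc_ren f P"
  define xs' where "xs' = bnl p'"
  have xs': "xs' = map f xs" by (simp add: xs'_def p'_def xs_def)
  have dxs': "distinct xs'" using dxs Case.prems(4) unfolding xs' by (simp add: distinct_map) (meson inj_on_subset subset_UNIV)
  define F' where "F' = fnp (Case p' P') \<union> dom \<sigma>' \<union> rnames \<sigma>'"
  define ys' where "ys' = fresh_list (length xs') F'"
  have finF': "finite F'" using Case.prems finite_rnames by (auto simp: F'_def is_subst_def)
  have ys': "length ys' = length xs'" "distinct ys'" "set ys' \<inter> F' = {}" using fresh_case[OF finF'] by (auto simp: ys'_def)
  define \<sigma>1' where "\<sigma>1' = \<sigma>' ++ map_of (zip xs' (map PVar ys'))"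
  define p1' where "p1' = rename_bn (map_of (zip xs' ys')) (patsub \<sigma>' p')"
  have eqL: "psub \<sigma> (Case p P) = Case p1 (psub \<sigma>1 P)"
    by (simp add: Let_def xs_def F_def ys_def \<sigma>1_def p1_def)
  have eqR: "psub \<sigma>' (proc_ren f (Case p P)) = Case p1' (psub \<sigma>1' P')"
    by (simp add: Let_def xs'_def F'_def ys'_def \<sigma>1'_def p1'_def p'_def P'_def)
  define A where "A = fnp (Case p P)"
  define S where "S = g ` ((A - dom \<sigma>) \<union> Nm \<sigma> A)"
  have cA: "cond \<sigma> \<sigma>' f g A" using Case.prems by (simp add: A_def)
  have fA: "fnp (Case p' P') = f ` A"
    using Case.prems(4) by (simp add: A_def p'_def P'_def fnp_ren image_Un image_set_diff)
  have S1: "S \<subseteq> F'" using cond_key[OF cA] fA unfolding S_def F'_def by auto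
  have SF: "(A - dom \<sigma>) \<union> Nm \<sigma> A \<subseteq> F" using Nm_rnames[of \<sigma> A] by (auto simp: F_def A_def)
  have "set ys \<inter> ((A - dom \<sigma>) \<union> Nm \<sigma> A) = {}" using ys(3) SF by blast
  then have d1: "set (map g ys) \<inter> S = {}"
    by (simp add: S_def image_Int[OF Case.prems(5), symmetric])
  have d2: "set ys' \<inter> S = {}" using ys'(3) S1 by auto
  have dgys: "distinct (map g ys)" using ys(2) Case.prems(5) by (simp add: distinct_map) (meson inj_on_subset subset_UNIV)
  have lgys: "length (map g ys) = length ys'" using ys ys' xs' by simp
  obtain L where L: "\<forall>(a,b)\<in>set L. a \<notin> S \<and> b \<notin> S" "map (swaps L) (map g ys) = ys'"
    using perm_exists[OF lgys dgys ys'(2) d1 d2] by blast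
  define \<tau> where "\<tau> = swaps L"
  define g' where "g' = \<tau> \<circ> g"
  have injg': "inj g'" unfolding g'_def \<tau>_def using Case.prems(5) by (simp add: inj_compose)
  have tfix: "\<And>n. n \<in> S \<Longrightarrow> \<tau> n = n" unfolding \<tau>_def using L(1) by (rule swaps_fix_set)
  have c1: "cond \<sigma> \<sigma>' f g' A" unfolding g'_def
    by (rule cond_tau[OF cA Case.prems(2)]) (use tfix in \<open>auto simp: S_def\<close>)
  have gys: "\<And>i. i < length xs \<Longrightarrow> g' (ys ! i) = ys' ! i"
  proof -
    fix i assume i: "i < length xs"
    have "map (swaps L) (map g ys) ! i = ys' ! i" using L(2) by simp
    then show "g' (ys ! i) = ys' ! i" using i ys by (simp add: g'_def \<tau>_def)
  qed
  have fnA: "fn p \<subseteq> A" by (auto simp: A_def)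
  have bind: "\<forall>x\<in>set xs. g' (rn (map_of (zip xs ys)) x) = rn (map_of (zip xs' ys')) (f x)"
  proof
    fix x assume "x \<in> set xs"
    then obtain i where i: "i < length xs" "x = xs ! i" by (auto simp: in_set_conv_nth)
    have "rn (map_of (zip xs ys)) x = ys ! i" using map_of_zip_in[of xs ys i] ys dxs i by (simp add: rn_def)
    moreover have "f x = xs' ! i" using i xs' by simp
    moreover have "rn (map_of (zip xs' ys')) (xs' ! i) = ys' ! i"
      using map_of_zip_in[of xs' ys' i] ys' dxs' i xs' by (simp add: rn_def)
    ultimately show "g' (rn (map_of (zip xs ys)) x) = rn (map_of (zip xs' ys')) (f x)" using gys i by simp
  qed
  have peq: "pat_ren g' p1 = p1'"
    unfolding p1_def p1'_def p'_def
    by (rule pat_eq[OF Case.prems(2,3)]) (use bind cond_mono[OF c1 fnA] in \<open>auto simp: xs_def\<close>)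
  have is1: "is_subst \<sigma>1" unfolding \<sigma>1_def using Case.prems ys by (intro is_subst_add is_subst_map_of_var) auto
  have is1': "is_subst \<sigma>1'" unfolding \<sigma>1'_def using Case.prems ys' by (intro is_subst_add is_subst_map_of_var) auto
  have c2: "cond \<sigma>1 \<sigma>1' f g' (fnp P - set xs)"
  proof (rule cond_agree[OF cond_mono[OF c1]])
    show "fnp P - set xs \<subseteq> A" by (auto simp: A_def xs_def bn_def)
  next
    fix z assume z: "z \<in> fnp P - set xs"
    show "\<sigma>1 z = \<sigma> z" using z ys by (simp add: \<sigma>1_def map_add_zip_out)
    have "f z \<notin> set xs'" using z Case.prems(4) by (auto simp: xs' inj_image_mem_iff)
    then show "\<sigma>1' (f z) = \<sigma>' (f z)" using ys' by (simp add: \<sigma>1'_def map_add_zip_out)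
  qed
  have c3: "cond \<sigma>1 \<sigma>1' f g' (set xs)"
    unfolding cond_def
  proof
    fix z assume "z \<in> set xs"
    then obtain i where i: "i < length xs" "z = xs ! i" by (auto simp: in_set_conv_nth)
    have "\<sigma>1 z = Some (PVar (ys ! i))" using map_add_zip_in[of xs ys i] ys dxs i by (simp add: \<sigma>1_def)
    moreover have "\<sigma>1' (f z) = Some (PVar (ys' ! i))"
      using map_add_zip_in[of xs' ys' i] ys' dxs' i xs' by (simp add: \<sigma>1'_def)
    ultimately show "case \<sigma>1 z of None \<Rightarrow> \<sigma>1' (f z) = None \<and> g' z = f z
          | Some v \<Rightarrow> \<sigma>1' (f z) = Some (pat_ren g' v)" using gys i by simp
  qed
  have c4: "cond \<sigma>1 \<sigma>1' f g' (fnp P)" by (rule cond_mono[OF cond_union[OF c2 c3]]) auto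
  have IH: "proc_ren g' (psub \<sigma>1 P) \<equiv>\<^sub>s psub \<sigma>1' P'"
    using Case.IH[OF wfP is1 is1' Case.prems(4) injg' c4] by (simp add: P'_def)
  define Z where "Z = proc_ren g (Case p1 (psub \<sigma>1 P))"
  have "fnp (psub \<sigma> (Case p P)) \<subseteq> (A - dom \<sigma>) \<union> Nm \<sigma> A"
    using fnp_psub[OF Case.prems(1,2)] by (simp add: A_def)
  then have fZ: "fnp Z \<subseteq> S" using eqL Case.prems(5) by (auto simp: Z_def S_def fnp_ren)
  have "Z \<equiv>\<^sub>s proc_ren (swaps L) Z"
    by (rule alpha_swaps) (use L(1) fZ in auto)
  also have "proc_ren (swaps L) Z = Case (pat_ren g' p1) (proc_ren g' (psub \<sigma>1 P))"
    by (simp add: Z_def g'_def \<tau>_def proc_ren_comp pat_ren_comp)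
  also have "Case (pat_ren g' p1) (proc_ren g' (psub \<sigma>1 P)) \<equiv>\<^sub>s Case p1' (psub \<sigma>1' P')"
    using IH peq by (auto intro: s_case)
  finally show ?case using eqL eqR by (simp add: Z_def)
qed


lemma psub_agree: "wf_proc P \<Longrightarrow> is_subst \<sigma> \<Longrightarrow> is_subst \<sigma>' \<Longrightarrow> (\<And>z. z \<in> fnp P \<Longrightarrow> \<sigma> z = \<sigma>' z)
  \<Longrightarrow> psub \<sigma> P \<equiv>\<^sub>s psub \<sigma>' P"
  using GA[of P \<sigma> \<sigma>' id id] unfolding cond_def by (auto split: option.splits)

lemma psub_swap: "wf_proc P \<Longrightarrow> is_subst \<sigma> \<Longrightarrow> a \<notin> fnp P \<Longrightarrow> b \<notin> fnp P
  \<Longrightarrow> psub \<sigma> P \<equiv>\<^sub>s psub \<sigma> (proc_swap a b P)"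
proof -
  assume a: "wf_proc P" "is_subst \<sigma>" "a \<notin> fnp P" "b \<notin> fnp P"
  have fx: "\<And>z. z \<in> fnp P \<Longrightarrow> swapn a b z = z" using a by (auto simp: swapn_def)
  have "cond \<sigma> \<sigma> (swapn a b) id (fnp P)" unfolding cond_def using fx by (auto split: option.splits)
  then show ?thesis using GA[of P \<sigma> \<sigma> "swapn a b" id] a by (simp add: proc_swap_ren)
qed

lemma rnames_upd: "rnames (\<sigma>(x \<mapsto> PVar y)) \<subseteq> rnames \<sigma> \<union> {y}"
  unfolding rnames_def by (auto simp: ran_def bn_def split: if_splits)

lemma Nm_sub_upd: "x \<notin> A \<Longrightarrow> Nm \<sigma> A \<subseteq> rnames (\<sigma>(x \<mapsto> v))"
proof -
  assume "x \<notin> A"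
  then have "Nm \<sigma> A = Nm (\<sigma>(x \<mapsto> v)) A" unfolding Nm_def by (intro SUP_cong) auto
  then show ?thesis using Nm_rnames by metis
qed

lemma newsub:
  assumes wf: "wf_proc P" and s: "is_subst \<sigma>" and y: "y \<notin> fnp (New x P) \<union> dom \<sigma> \<union> rnames \<sigma>"
  shows "psub \<sigma> (New x P) \<equiv>\<^sub>s New y (psub (\<sigma>(x \<mapsto> PVar y)) P)"
proof -
  define y0 where "y0 = fresh (fnp (New x P) \<union> dom \<sigma> \<union> rnames \<sigma>)"
  have y0: "y0 \<notin> fnp (New x P) \<union> dom \<sigma> \<union> rnames \<sigma>" unfolding y0_def
    using s by (intro fresh_notin) (auto simp: finite_rnames finite_dom_subst)
  define \<sigma>0 where "\<sigma>0 = \<sigma>(x \<mapsto> PVar y0)"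
  define \<sigma>1 where "\<sigma>1 = \<sigma>(x \<mapsto> PVar y)"
  have eq: "psub \<sigma> (New x P) = New y0 (psub \<sigma>0 P)" by (simp add: y0_def \<sigma>0_def Let_def)
  have is0: "is_subst \<sigma>0" unfolding \<sigma>0_def using s by (intro is_subst_upd) auto
  have is1: "is_subst \<sigma>1" unfolding \<sigma>1_def using s by (intro is_subst_upd) auto
  have c: "cond \<sigma>0 \<sigma>1 id (swapn y0 y) (fnp P)"
    unfolding cond_def
  proof
    fix z assume z: "z \<in> fnp P"
    show "case \<sigma>0 z of None \<Rightarrow> \<sigma>1 (id z) = None \<and> swapn y0 y z = id z
          | Some v \<Rightarrow> \<sigma>1 (id z) = Some (pat_ren (swapn y0 y) v)"
    proof (cases "z = x")
      case True then show ?thesis by (simp add: \<sigma>0_def \<sigma>1_def)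
    next
      case False
      then have zz: "z \<noteq> y0" "z \<noteq> y" using z y y0 by auto
      show ?thesis
      proof (cases "\<sigma> z")
        case None then show ?thesis using False zz by (simp add: \<sigma>0_def \<sigma>1_def)
      next
        case (Some v)
        have cv: "communicable v" using is_subst_comm[OF s Some] .
        have "vn v \<union> pn v \<subseteq> rnames \<sigma>" using rnames_in[of \<sigma> z v, OF Some] .
        moreover have "y \<notin> rnames \<sigma>" "y0 \<notin> rnames \<sigma>" using y y0 by auto
        ultimately have "pat_ren (swapn y0 y) v = v"
          using cv by (intro pat_ren_fix) (metis Un_iff communicable_def empty_iff in_mono swapn_other)
        then show ?thesis using False Some by (simp add: \<sigma>0_def \<sigma>1_def)
      qed
    qed
  qed
  have GA1: "proc_ren (swapn y0 y) (psub \<sigma>0 P) \<equiv>\<^sub>s psub \<sigma>1 P"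
    using GA[OF wf is0 is1 _ _ c] by simp
  have "fnp (psub \<sigma>0 P) \<subseteq> (fnp P - dom \<sigma>0) \<union> Nm \<sigma>0 (fnp P)" using fnp_psub[OF wf is0] .
  moreover have "Nm \<sigma>0 (fnp P) \<subseteq> {y0} \<union> Nm \<sigma> (fnp P - {x})" unfolding \<sigma>0_def by (rule Nm_upd)
  moreover have "Nm \<sigma> (fnp P - {x}) \<subseteq> rnames \<sigma>" by (rule Nm_rnames)
  ultimately have "y \<notin> fnp (New y0 (psub \<sigma>0 P))" using y by (auto simp: \<sigma>0_def)
  then have "New y0 (psub \<sigma>0 P) \<equiv>\<^sub>s proc_swap y0 y (New y0 (psub \<sigma>0 P))"
    by (intro s_alpha) auto
  also have "proc_swap y0 y (New y0 (psub \<sigma>0 P)) = New y (proc_ren (swapn y0 y) (psub \<sigma>0 P))"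
    by (simp add: proc_swap_ren)
  also have "\<dots> \<equiv>\<^sub>s New y (psub \<sigma>1 P)" using GA1 by (rule s_new)
  finally show ?thesis using eq by (simp add: \<sigma>1_def)
qed


lemma fresh_avoid: "finite (X :: name set) \<Longrightarrow> \<exists>a. a \<notin> X" using fresh_notin[of X] by (intro exI[of _ "fresh X"])

lemma fresh_avoid2: "finite (X :: name set) \<Longrightarrow> \<exists>a b. a \<notin> X \<and> b \<notin> X \<and> a \<noteq> b"
proof -
  assume f: "finite X"
  obtain a where a: "a \<notin> X" using fresh_avoid[OF f] by blast
  obtain b where b: "b \<notin> insert a X" using fresh_avoid[of "insert a X"] f by blast
  show ?thesis using a b by blast
qed

lemma scong_subst: "P \<equiv>\<^sub>s Q \<Longrightarrow> wf_proc P \<Longrightarrow> is_subst \<sigma> \<Longrightarrow> psub \<sigma> P \<equiv>\<^sub>s psub \<sigma> Q"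
proof (induction arbitrary: \<sigma> rule: scong.induct)
  case (s_refl P) show ?case by (rule scong.s_refl)
next
  case (s_sym P Q)
  then have "wf_proc P" using scong_wf by blast
  with s_sym show ?case by (metis scong.s_sym)
next
  case (s_trans P Q R)
  then have "wf_proc Q" using scong_wf by blast
  with s_trans show ?case by (metis scong.s_trans)
next
  case (s_par P P' Q Q') then show ?case by (simp add: scong.s_par)
next
  case (s_rep P P') then show ?case by (simp add: scong.s_rep)
next
  case (s_new P P' n)
  have fin: "finite (fnp P \<union> fnp P' \<union> {n} \<union> dom \<sigma> \<union> rnames \<sigma>)"
    using s_new.prems by (auto simp: finite_rnames finite_dom_subst)
  obtain a where a: "a \<notin> fnp P \<union> fnp P' \<union> {n} \<union> dom \<sigma> \<union> rnames \<sigma>" using fresh_avoid[OF fin] by blast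
  have wfP: "wf_proc P" "wf_proc P'" using s_new.prems scong_wf[OF s_new.hyps] by auto
  have is1: "is_subst (\<sigma>(n \<mapsto> PVar a))" using s_new.prems by (intro is_subst_upd) auto
  have "psub \<sigma> (New n P) \<equiv>\<^sub>s New a (psub (\<sigma>(n \<mapsto> PVar a)) P)"
    using a by (intro newsub wfP s_new.prems) auto
  also have "\<dots> \<equiv>\<^sub>s New a (psub (\<sigma>(n \<mapsto> PVar a)) P')" using s_new.IH[OF wfP(1) is1] by (rule scong.s_new)
  also have "\<dots> \<equiv>\<^sub>s psub \<sigma> (New n P')"
    using a by (intro scong.s_sym[OF newsub] wfP s_new.prems) auto
  finally show ?case .
next
  case (s_case P P' p)
  have hf: "fnp P' = fnp P" using scong_fnp[OF s_case.hyps] by simp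
  have wfP: "wf_proc P" using s_case.prems by simp
  define xs where "xs = bnl p"
  define F where "F = fnp (Case p P) \<union> dom \<sigma> \<union> rnames \<sigma>"
  define ys where "ys = fresh_list (length xs) F"
  have finF: "finite F" using s_case.prems finite_rnames by (auto simp: F_def is_subst_def)
  have ys: "length ys = length xs" "distinct ys" "set ys \<inter> F = {}" using fresh_case[OF finF] by (auto simp: ys_def)
  define \<sigma>1 where "\<sigma>1 = \<sigma> ++ map_of (zip xs (map PVar ys))"
  define p1 where "p1 = rename_bn (map_of (zip xs ys)) (patsub \<sigma> p)"
  have is1: "is_subst \<sigma>1" unfolding \<sigma>1_def using s_case.prems ys by (intro is_subst_add is_subst_map_of_var) auto
  have eq1: "psub \<sigma> (Case p P) = Case p1 (psub \<sigma>1 P)"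
    by (simp add: Let_def xs_def F_def ys_def \<sigma>1_def p1_def)
  have eq2: "psub \<sigma> (Case p P') = Case p1 (psub \<sigma>1 P')"
    by (simp add: Let_def xs_def F_def ys_def \<sigma>1_def p1_def hf)
  show ?case using eq1 eq2 s_case.IH[OF wfP is1] by (auto intro: scong.s_case)
next
  case (s_alpha a P b)
  then show ?case by (intro psub_swap) auto
next
  case (s_par_zero P) then show ?case by (simp add: scong.s_par_zero)
next
  case (s_par_comm P Q) then show ?case by (simp add: scong.s_par_comm)
next
  case (s_par_assoc P Q R) then show ?case by (simp add: scong.s_par_assoc)
next
  case (s_new_zero n) then show ?case by (simp add: Let_def scong.s_new_zero)
next
  case (s_new_new n m P)
  show ?case
  proof (cases "n = m")
    case True then show ?thesis by (simp add: scong.s_refl)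
  next
    case False
    have wfP: "wf_proc P" using s_new_new.prems by simp
    have fin: "finite (fnp P \<union> {n, m} \<union> dom \<sigma> \<union> rnames \<sigma>)"
      using s_new_new.prems by (auto simp: finite_rnames finite_dom_subst)
    obtain a b where ab: "a \<notin> fnp P \<union> {n, m} \<union> dom \<sigma> \<union> rnames \<sigma>" "b \<notin> fnp P \<union> {n, m} \<union> dom \<sigma> \<union> rnames \<sigma>" "a \<noteq> b"
      using fresh_avoid2[OF fin] by blast
    have isa: "is_subst (\<sigma>(n \<mapsto> PVar a))" using s_new_new.prems by (intro is_subst_upd) auto
    have isb: "is_subst (\<sigma>(m \<mapsto> PVar b))" using s_new_new.prems by (intro is_subst_upd) auto
    have ra: "rnames (\<sigma>(n \<mapsto> PVar a)) \<subseteq> rnames \<sigma> \<union> {a}" by (rule rnames_upd)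
    have rb: "rnames (\<sigma>(m \<mapsto> PVar b)) \<subseteq> rnames \<sigma> \<union> {b}" by (rule rnames_upd)
    have "psub \<sigma> (New n (New m P)) \<equiv>\<^sub>s New a (psub (\<sigma>(n \<mapsto> PVar a)) (New m P))"
      using ab by (intro newsub s_new_new.prems) (auto simp: wfP)
    also have "\<dots> \<equiv>\<^sub>s New a (New b (psub (\<sigma>(n \<mapsto> PVar a, m \<mapsto> PVar b)) P))"
      using ab ra by (intro scong.s_new newsub wfP isa) auto
    also have "\<dots> \<equiv>\<^sub>s New b (New a (psub (\<sigma>(n \<mapsto> PVar a, m \<mapsto> PVar b)) P))" by (rule scong.s_new_new)
    also have "\<sigma>(n \<mapsto> PVar a, m \<mapsto> PVar b) = \<sigma>(m \<mapsto> PVar b, n \<mapsto> PVar a)" using False by (rule fun_upd_twist)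
    also have "New b (New a (psub (\<sigma>(m \<mapsto> PVar b, n \<mapsto> PVar a)) P)) \<equiv>\<^sub>s New b (psub (\<sigma>(m \<mapsto> PVar b)) (New n P))"
      using ab rb by (intro scong.s_new scong.s_sym[OF newsub] wfP isb) auto
    also have "\<dots> \<equiv>\<^sub>s psub \<sigma> (New m (New n P))"
      using ab by (intro scong.s_sym[OF newsub] s_new_new.prems) (auto simp: wfP)
    finally show ?thesis .
  qed
next
  case (s_rep_unf P) then show ?case by (simp add: scong.s_rep_unf)
next
  case (s_extr n P Q)
  have wfP: "wf_proc P" "wf_proc Q" using s_extr.prems by auto
  have fin: "finite (fnp P \<union> fnp Q \<union> {n} \<union> dom \<sigma> \<union> rnames \<sigma>)"
    using s_extr.prems by (auto simp: finite_rnames finite_dom_subst)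
  obtain a where a: "a \<notin> fnp P \<union> fnp Q \<union> {n} \<union> dom \<sigma> \<union> rnames \<sigma>" using fresh_avoid[OF fin] by blast
  define \<sigma>1 where "\<sigma>1 = \<sigma>(n \<mapsto> PVar a)"
  have is1: "is_subst \<sigma>1" unfolding \<sigma>1_def using s_extr.prems by (intro is_subst_upd) auto
  have "fnp (psub \<sigma> P) \<subseteq> (fnp P - dom \<sigma>) \<union> Nm \<sigma> (fnp P)" using fnp_psub[OF wfP(1) s_extr.prems(2)] .
  then have aP: "a \<notin> fnp (psub \<sigma> P)" using a Nm_rnames[of \<sigma> "fnp P"] by auto
  have "psub \<sigma> (Par P (New n Q)) = Par (psub \<sigma> P) (psub \<sigma> (New n Q))" by simp
  also have "\<dots> \<equiv>\<^sub>s Par (psub \<sigma> P) (New a (psub \<sigma>1 Q))"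
    using a unfolding \<sigma>1_def by (intro scong.s_par scong.s_refl newsub wfP s_extr.prems) auto
  also have "\<dots> \<equiv>\<^sub>s New a (Par (psub \<sigma> P) (psub \<sigma>1 Q))" using aP by (rule scong.s_extr)
  also have "\<dots> \<equiv>\<^sub>s New a (Par (psub \<sigma>1 P) (psub \<sigma>1 Q))"
    using s_extr.hyps by (intro scong.s_new scong.s_par scong.s_refl psub_agree wfP s_extr.prems is1)
      (auto simp: \<sigma>1_def)
  also have "\<dots> = New a (psub \<sigma>1 (Par P Q))" by simp
  also have "\<dots> \<equiv>\<^sub>s psub \<sigma> (New n (Par P Q))"
    using a unfolding \<sigma>1_def by (intro scong.s_sym[OF newsub] s_extr.prems) (auto simp: wfP)
  finally show ?case .
qed


fun skel :: "pat \<Rightarrow> pat" where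
  "skel (PBind x) = PBind 0"
| "skel (PVar x) = PVar x"
| "skel (PProt x) = PProt x"
| "skel (PComp p q) = PComp (skel p) (skel q)"

lemma skel_PBind: "skel p = PBind n \<Longrightarrow> \<exists>x. p = PBind x" by (cases p) auto
lemma skel_PVar: "skel p = PVar n \<Longrightarrow> p = PVar n" by (cases p) auto
lemma skel_PProt: "skel p = PProt n \<Longrightarrow> p = PProt n" by (cases p) auto
lemma skel_PComp: "skel p = PComp a b \<Longrightarrow> \<exists>p1 p2. p = PComp p1 p2 \<and> skel p1 = a \<and> skel p2 = b"
  by (cases p) auto

lemma skel_comm: "communicable q \<Longrightarrow> skel q' = skel q \<Longrightarrow> q' = q"
proof (induction q arbitrary: q')
  case (PBind x) then show ?case by simp
next
  case (PVar x)
  then have "skel q' = PVar x" by simp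
  then show ?case by (rule skel_PVar)
next
  case (PProt x) then show ?case by simp
next
  case (PComp a b)
  then have "skel q' = PComp (skel a) (skel b)" by simp
  then obtain a' b' where "q' = PComp a' b'" "skel a' = skel a" "skel b' = skel b"
    using skel_PComp by blast
  then show ?case using PComp by simp
qed

lemma bnl_skel_len: "length (bnl (skel p)) = length (bnl p)" by (induction p) auto

lemma skel_len: "skel p' = skel p \<Longrightarrow> length (bnl p') = length (bnl p)"
  by (metis bnl_skel_len)

abbreviation mz :: "name list \<Rightarrow> pat list \<Rightarrow> subst" where
  "mz xs vs \<equiv> map_of (zip xs vs)"

lemma mz_append: "length xs1 = length vs1 \<Longrightarrow> set xs1 \<inter> set xs2 = {} \<Longrightarrow>
  mz (xs1 @ xs2) (vs1 @ vs2) = mz xs1 vs1 ++ mz xs2 vs2"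
proof -
  assume l: "length xs1 = length vs1" and d: "set xs1 \<inter> set xs2 = {}"
  have "mz (xs1 @ xs2) (vs1 @ vs2) = mz xs2 vs2 ++ mz xs1 vs1" using l by (simp add: map_of_append)
  also have "\<dots> = mz xs1 vs1 ++ mz xs2 vs2"
  proof (rule map_add_comm)
    have "dom (mz xs2 vs2) \<subseteq> set xs2" "dom (mz xs1 vs1) \<subseteq> set xs1"
      unfolding dom_map_of_conv_image_fst by (auto dest: set_zip_leftD)
    then show "dom (mz xs2 vs2) \<inter> dom (mz xs1 vs1) = {}" using d by blast
  qed
  finally show ?thesis .
qed

definition unif_ok :: "pat \<Rightarrow> pat \<Rightarrow> pat \<Rightarrow> pat \<Rightarrow> subst \<Rightarrow> subst \<Rightarrow> bool" where
  "unif_ok p q p' q' \<sigma> \<rho> \<longleftrightarrow> (\<exists>vs ws. length vs = length (bnl p) \<and> length ws = length (bnl q) \<and>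
     (\<forall>v\<in>set vs. communicable v) \<and> (\<forall>w\<in>set ws. communicable w) \<and>
     \<sigma> = mz (bnl p) vs \<and> \<rho> = mz (bnl q) ws \<and>
     unify p' q' = Some (mz (bnl p') vs, mz (bnl q') ws))"

lemma unify_transfer:
  assumes "unify p q = Some (\<sigma>, \<rho>)" "skel p' = skel p" "skel q' = skel q"
    "distinct (bnl p)" "distinct (bnl q)" "distinct (bnl p')" "distinct (bnl q')"
  shows "unif_ok p q p' q' \<sigma> \<rho>"
  using assms
proof (induction p arbitrary: q p' q' \<sigma> \<rho>)
  case (PBind x)
  then have c: "communicable q" and e: "\<sigma> = [x \<mapsto> q]" "\<rho> = Map.empty" by (auto split: if_splits)
  obtain x' where p': "p' = PBind x'" using skel_PBind[of p'] PBind.prems by auto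
  have q': "q' = q" using skel_comm[OF c] PBind.prems by simp
  have bq: "bnl q = []" using c by (rule communicable_bnl)
  show ?case unfolding unif_ok_def
    by (rule exI[of _ "[q]"], rule exI[of _ "[]"]) (use c e p' q' bq in auto)
next
  case (PVar x)
  have p': "p' = PVar x" using skel_PVar PVar.prems by simp
  show ?case
  proof (cases q)
    case (PBind y)
    obtain y' where q': "q' = PBind y'" using skel_PBind[of q'] PVar.prems PBind by auto
    show ?thesis unfolding unif_ok_def using PVar.prems PBind
      by (intro exI[of _ "[]"] exI[of _ "[PVar x]"]) (auto simp: p' q')
  next
    case (PVar y)
    then show ?thesis unfolding unif_ok_def using PVar.prems skel_PVar[of q'] p'
      by (intro exI[of _ "[]"] exI[of _ "[]"]) (auto split: if_splits)
  next
    case (PProt y)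
    then show ?thesis unfolding unif_ok_def using PVar.prems skel_PProt[of q'] p'
      by (intro exI[of _ "[]"] exI[of _ "[]"]) (auto split: if_splits)
  next
    case (PComp a b)
    then show ?thesis using PVar.prems by simp
  qed
next
  case (PProt x)
  have p': "p' = PProt x" using skel_PProt PProt.prems by simp
  show ?case
  proof (cases q)
    case (PBind y)
    then show ?thesis using PProt.prems by simp
  next
    case (PVar y)
    then show ?thesis unfolding unif_ok_def using PProt.prems skel_PVar[of q'] p'
      by (intro exI[of _ "[]"] exI[of _ "[]"]) (auto split: if_splits)
  next
    case (PProt y)
    then show ?thesis unfolding unif_ok_def using PProt.prems skel_PProt[of q'] p'
      by (intro exI[of _ "[]"] exI[of _ "[]"]) (auto split: if_splits)
  next
    case (PComp a b)
    then show ?thesis using PProt.prems by simp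
  qed
next
  case (PComp p1 p2)
  show ?case
  proof (cases q)
    case (PBind y)
    then have c: "communicable (PComp p1 p2)" and e: "\<sigma> = Map.empty" "\<rho> = [y \<mapsto> PComp p1 p2]"
      using PComp.prems by (auto split: if_splits)
    obtain y' where q': "q' = PBind y'" using skel_PBind[of q'] PComp.prems PBind by auto
    have p': "p' = PComp p1 p2" using skel_comm[OF c] PComp.prems by simp
    have bp: "bnl (PComp p1 p2) = []" using c by (rule communicable_bnl)
    show ?thesis unfolding unif_ok_def
      by (rule exI[of _ "[]"], rule exI[of _ "[PComp p1 p2]"]) (use c e p' q' bp PBind in auto)
  next
    case (PVar y) then show ?thesis using PComp.prems by simp
  next
    case (PProt y) then show ?thesis using PComp.prems by simp
  next
    case (PComp q1 q2)
    obtain p1' p2' where p': "p' = PComp p1' p2'" "skel p1' = skel p1" "skel p2' = skel p2"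
      using skel_PComp[of p'] PComp.prems(2) by force
    obtain q1' q2' where q': "q' = PComp q1' q2'" "skel q1' = skel q1" "skel q2' = skel q2"
      using skel_PComp[of q'] PComp.prems(3) \<open>q = PComp q1 q2\<close> by force
    from PComp.prems(1) \<open>q = _\<close> obtain s1 r1 s2 r2 where u: "unify p1 q1 = Some (s1, r1)"
      "unify p2 q2 = Some (s2, r2)" "\<sigma> = s1 ++ s2" "\<rho> = r1 ++ r2"
      by (auto split: option.splits)
    have d: "distinct (bnl p1)" "distinct (bnl p2)" "distinct (bnl q1)" "distinct (bnl q2)"
      "distinct (bnl p1')" "distinct (bnl p2')" "distinct (bnl q1')" "distinct (bnl q2')"
      using PComp.prems p' q' \<open>q = _\<close> by auto
    have o1: "unif_ok p1 q1 p1' q1' s1 r1" using PComp.IH(1)[OF u(1) p'(2) q'(2)] d by simp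
    have o2: "unif_ok p2 q2 p2' q2' s2 r2" using PComp.IH(2)[OF u(2) p'(3) q'(3)] d by simp
    obtain vs1 ws1 where w1: "length vs1 = length (bnl p1)" "length ws1 = length (bnl q1)"
      "\<forall>v\<in>set vs1. communicable v" "\<forall>w\<in>set ws1. communicable w" "s1 = mz (bnl p1) vs1" "r1 = mz (bnl q1) ws1"
      "unify p1' q1' = Some (mz (bnl p1') vs1, mz (bnl q1') ws1)" using o1 unfolding unif_ok_def by blast
    obtain vs2 ws2 where w2: "length vs2 = length (bnl p2)" "length ws2 = length (bnl q2)"
      "\<forall>v\<in>set vs2. communicable v" "\<forall>w\<in>set ws2. communicable w" "s2 = mz (bnl p2) vs2" "r2 = mz (bnl q2) ws2"
      "unify p2' q2' = Some (mz (bnl p2') vs2, mz (bnl q2') ws2)" using o2 unfolding unif_ok_def by blast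
    have lp1: "length (bnl p1') = length (bnl p1)" using skel_len[OF p'(2)] .
    have lq1: "length (bnl q1') = length (bnl q1)" using skel_len[OF q'(2)] .
    have dj: "set (bnl p1) \<inter> set (bnl p2) = {}" "set (bnl q1) \<inter> set (bnl q2) = {}"
      "set (bnl p1') \<inter> set (bnl p2') = {}" "set (bnl q1') \<inter> set (bnl q2') = {}"
      using PComp.prems p' q' \<open>q = _\<close> by auto
    have e1: "\<sigma> = mz (bnl (PComp p1 p2)) (vs1 @ vs2)" using u w1 w2 dj mz_append by simp
    have e2: "\<rho> = mz (bnl q) (ws1 @ ws2)" using u w1 w2 dj mz_append \<open>q = _\<close> by simp
    have e3: "unify p' q' = Some (mz (bnl p') (vs1 @ vs2), mz (bnl q') (ws1 @ ws2))"
      using w1(7) w2(7) p' q' dj mz_append lp1 lq1 w1(1,2) by simp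
    show ?thesis unfolding unif_ok_def
      by (rule exI[of _ "vs1 @ vs2"], rule exI[of _ "ws1 @ ws2"]) (use e1 e2 e3 w1 w2 \<open>q = _\<close> in auto)
  qed
qed


definition gsim :: "proc \<Rightarrow> proc \<Rightarrow> bool" where
  "gsim g g' \<longleftrightarrow> (\<exists>p P p' P'. g = Case p P \<and> g' = Case p' P' \<and> wf_pat p \<and> wf_pat p' \<and>
     wf_proc P \<and> wf_proc P' \<and> skel p = skel p' \<and> fnp g = fnp g' \<and>
     (\<forall>vs. length vs = length (bnl p) \<longrightarrow> (\<forall>v\<in>set vs. communicable v) \<longrightarrow>
        psub (mz (bnl p) vs) P \<equiv>\<^sub>s psub (mz (bnl p') vs) P'))"

lemma gsim_refl: "wf_proc (Case p P) \<Longrightarrow> gsim (Case p P) (Case p P)"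
  unfolding gsim_def by (auto intro: s_refl)

lemma gsim_sym: "gsim g g' \<Longrightarrow> gsim g' g"
proof -
  assume a: "gsim g g'"
  from a obtain p P p' P' where A: "g = Case p P" "g' = Case p' P'" "wf_pat p" "wf_pat p'"
     "wf_proc P" "wf_proc P'" "skel p = skel p'" "fnp g = fnp g'"
     "\<forall>vs. length vs = length (bnl p) \<longrightarrow> (\<forall>v\<in>set vs. communicable v) \<longrightarrow>
        psub (mz (bnl p) vs) P \<equiv>\<^sub>s psub (mz (bnl p') vs) P'" unfolding gsim_def by blast
  have l: "length (bnl p') = length (bnl p)" using skel_len A(7) by metis
  show ?thesis unfolding gsim_def
    by (intro exI[of _ p'] exI[of _ P'] exI[of _ p] exI[of _ P])
      (use A l in \<open>auto intro: s_sym\<close>)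
qed

lemma gsim_trans: "gsim g g' \<Longrightarrow> gsim g' g'' \<Longrightarrow> gsim g g''"
proof -
  assume a: "gsim g g'" "gsim g' g''"
  from a(1) obtain p P p' P' where A: "g = Case p P" "g' = Case p' P'" "wf_pat p" "wf_pat p'"
     "wf_proc P" "wf_proc P'" "skel p = skel p'" "fnp g = fnp g'"
     "\<forall>vs. length vs = length (bnl p) \<longrightarrow> (\<forall>v\<in>set vs. communicable v) \<longrightarrow>
        psub (mz (bnl p) vs) P \<equiv>\<^sub>s psub (mz (bnl p') vs) P'" unfolding gsim_def by blast
  from a(2) A(2) obtain p'' P'' where B: "g'' = Case p'' P''" "wf_pat p''"
     "wf_proc P''" "skel p' = skel p''" "fnp g' = fnp g''"
     "\<forall>vs. length vs = length (bnl p') \<longrightarrow> (\<forall>v\<in>set vs. communicable v) \<longrightarrow>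
        psub (mz (bnl p') vs) P' \<equiv>\<^sub>s psub (mz (bnl p'') vs) P''" unfolding gsim_def by auto
  have l: "length (bnl p') = length (bnl p)" using skel_len A(7) by metis
  show ?thesis unfolding gsim_def
    by (intro exI[of _ p] exI[of _ P] exI[of _ p''] exI[of _ P''])
      (use A B l in \<open>auto intro: s_trans\<close>)
qed

lemma gsim_fnp: "gsim g g' \<Longrightarrow> fnp g = fnp g'" unfolding gsim_def by blast

lemma gsim_wf: "gsim g g' \<Longrightarrow> wf_proc g \<and> wf_proc g'" unfolding gsim_def by auto

lemma gsim_case: "wf_proc (Case p P) \<Longrightarrow> P \<equiv>\<^sub>s P' \<Longrightarrow> gsim (Case p P) (Case p P')"
proof -
  assume w: "wf_proc (Case p P)" and e: "P \<equiv>\<^sub>s P'"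
  have "wf_proc P'" using w scong_wf[OF e] by simp
  moreover have "fnp P = fnp P'" using scong_fnp[OF e] .
  moreover have "\<forall>vs. length vs = length (bnl p) \<longrightarrow> (\<forall>v\<in>set vs. communicable v) \<longrightarrow>
        psub (mz (bnl p) vs) P \<equiv>\<^sub>s psub (mz (bnl p) vs) P'"
    using w e by (auto intro!: scong_subst is_subst_map_of)
  ultimately show ?thesis using w unfolding gsim_def by auto
qed

lemma skel_ren_fix: "(\<And>x. x \<in> fn p \<Longrightarrow> h x = x) \<Longrightarrow> skel (pat_ren h p) = skel p"
  by (induction p) auto

lemma map_of_zip_inj: "inj h \<Longrightarrow> map_of (zip (map h xs) vs) (h z) = map_of (zip xs vs) z"
proof (induction xs arbitrary: vs)
  case Nil then show ?case by simp
next
  case (Cons x xs) then show ?case by (cases vs) (auto simp: inj_eq)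
qed

lemma gsim_swap:
  assumes w: "wf_proc (Case p P)" and ab: "a \<notin> fnp (Case p P)" "b \<notin> fnp (Case p P)"
  shows "gsim (Case p P) (proc_swap a b (Case p P))"
proof -
  let ?h = "swapn a b"
  have fx: "\<And>z. z \<in> fnp (Case p P) \<Longrightarrow> ?h z = z" using ab by (auto simp: swapn_def)
  have e: "proc_swap a b (Case p P) = Case (pat_ren ?h p) (proc_ren ?h P)" by (simp add: proc_swap_ren pat_swap_ren)
  have sk: "skel (pat_ren ?h p) = skel p" using fx by (intro skel_ren_fix) auto
  have wf': "wf_pat (pat_ren ?h p)" "wf_proc (proc_ren ?h P)" using w by (auto intro: wf_pat_ren wf_proc_ren)
  have fn': "fnp (Case (pat_ren ?h p) (proc_ren ?h P)) = fnp (Case p P)"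
    using fnp_swap_fix[of a "Case p P" b] ab by (simp add: proc_swap_ren pat_swap_ren)
  have ps: "psub (mz (bnl p) vs) P \<equiv>\<^sub>s psub (mz (bnl (pat_ren ?h p)) vs) (proc_ren ?h P)"
    if l: "length vs = length (bnl p)" and c: "\<forall>v\<in>set vs. communicable v" for vs
  proof -
    have is1: "is_subst (mz (bnl p) vs)" using l c by (intro is_subst_map_of) auto
    have is2: "is_subst (mz (map ?h (bnl p)) vs)" using l c by (intro is_subst_map_of) auto
    have "cond (mz (bnl p) vs) (mz (map ?h (bnl p)) vs) ?h id (fnp P)"
      unfolding cond_def
    proof
      fix z assume z: "z \<in> fnp P"
      have m: "mz (map ?h (bnl p)) vs (?h z) = mz (bnl p) vs z" by (rule map_of_zip_inj) simp
      show "case mz (bnl p) vs z of None \<Rightarrow> mz (map ?h (bnl p)) vs (?h z) = None \<and> id z = ?h z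
          | Some v \<Rightarrow> mz (map ?h (bnl p)) vs (?h z) = Some (pat_ren id v)"
      proof (cases "mz (bnl p) vs z")
        case None
        then have "z \<notin> set (bnl p)" using l map_of_zip_None[of "bnl p" vs z] by simp
        then have "z \<in> fnp (Case p P)" using z by (auto simp: bn_def)
        then show ?thesis using None m fx by simp
      next
        case (Some v) then show ?thesis using m by simp
      qed
    qed
    then have "proc_ren id (psub (mz (bnl p) vs) P) \<equiv>\<^sub>s psub (mz (map ?h (bnl p)) vs) (proc_ren ?h P)"
      using w by (intro GA is1 is2) auto
    then show ?thesis by simp
  qed
  show ?thesis unfolding gsim_def e
    by (intro exI[of _ p] exI[of _ P] exI[of _ "pat_ren ?h p"] exI[of _ "proc_ren ?h P"])
      (use w wf' sk fn' ps in auto)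
qed


fun tg :: "proc \<Rightarrow> proc multiset option" where
  "tg Zero = Some {#}"
| "tg (Par P Q) = (case (tg P, tg Q) of (Some M, Some N) \<Rightarrow> Some (M + N) | _ \<Rightarrow> None)"
| "tg (Rep P) = None"
| "tg (New n P) = (case tg P of Some M \<Rightarrow> if (\<forall>g\<in>#M. n \<notin> fnp g) then Some M else None | None \<Rightarrow> None)"
| "tg (Case p P) = Some {#Case p P#}"

lemma tg_Par_Some: "tg (Par P Q) = Some K \<longleftrightarrow> (\<exists>M N. tg P = Some M \<and> tg Q = Some N \<and> K = M + N)"
  by (auto split: option.splits)

lemma tg_New_Some: "tg (New n P) = Some K \<longleftrightarrow> tg P = Some K \<and> (\<forall>g\<in>#K. n \<notin> fnp g)"
  by (auto split: option.splits)

lemma tg_props: "tg P = Some M \<Longrightarrow> g \<in># M \<Longrightarrow> fnp g \<subseteq> fnp P \<and> (\<exists>p Q. g = Case p Q) \<and> (wf_proc P \<longrightarrow> wf_proc g)"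
proof (induction P arbitrary: M)
  case (Par P1 P2)
  from Par.prems(1) obtain M1 M2 where m: "tg P1 = Some M1" "tg P2 = Some M2" "M = M1 + M2"
    unfolding tg_Par_Some by blast
  show ?case
  proof (cases "g \<in># M1")
    case True then show ?thesis using Par.IH(1)[OF m(1)] by auto
  next
    case False then have "g \<in># M2" using Par.prems m by auto
    then show ?thesis using Par.IH(2)[OF m(2)] by auto
  qed
next
  case (New n P)
  from New.prems(1) have m: "tg P = Some M" "\<forall>g\<in>#M. n \<notin> fnp g" unfolding tg_New_Some by blast+
  then show ?case using New.IH[OF m(1) New.prems(2)] New.prems(2) by auto
qed (auto split: if_splits)

lemma tg_fnp_sub: "tg P = Some M \<Longrightarrow> fnp P \<subseteq> (\<Union>g\<in>set_mset M. fnp g)"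
proof (induction P arbitrary: M)
  case (Par P1 P2)
  from Par.prems(1) obtain M1 M2 where m: "tg P1 = Some M1" "tg P2 = Some M2" "M = M1 + M2"
    unfolding tg_Par_Some by blast
  then show ?case using Par.IH(1)[OF m(1)] Par.IH(2)[OF m(2)] by auto
next
  case (New n P)
  from New.prems(1) have m: "tg P = Some M" unfolding tg_New_Some by blast+
  then show ?case using New.IH[OF m(1)] by auto
qed (auto split: if_splits)

lemma tg_zero: "tg J = Some {#} \<Longrightarrow> J \<equiv>\<^sub>s Zero"
proof (induction J)
  case Zero show ?case by (rule s_refl)
next
  case (Par P Q)
  then have "tg P = Some {#}" "tg Q = Some {#}" unfolding tg_Par_Some by auto
  then have "P \<equiv>\<^sub>s Zero" "Q \<equiv>\<^sub>s Zero" using Par.IH by auto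
  then have "Par P Q \<equiv>\<^sub>s Par Zero Zero" by (rule s_par)
  also have "Par Zero Zero \<equiv>\<^sub>s Zero" by (rule s_par_zero)
  finally show ?case .
next
  case (New n P)
  then have "tg P = Some {#}" unfolding tg_New_Some by auto
  then have "P \<equiv>\<^sub>s Zero" using New.IH by auto
  then have "New n P \<equiv>\<^sub>s New n Zero" by (rule s_new)
  also have "New n Zero \<equiv>\<^sub>s Zero" by (rule s_new_zero)
  finally show ?case .
qed auto

lemma tg_ren: "inj h \<Longrightarrow> tg (proc_ren h P) = map_option (image_mset (proc_ren h)) (tg P)"
proof (induction P)
  case (Par P1 P2) then show ?case by (auto split: option.splits)
next
  case (New n P)
  have "(\<forall>g\<in>#image_mset (proc_ren h) M. h n \<notin> fnp g) = (\<forall>g\<in>#M. n \<notin> fnp g)" for M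
    using New.prems by (auto simp: fnp_ren inj_image_mem_iff)
  then show ?case using New by (auto split: option.splits)
qed auto

definition trel :: "proc multiset option \<Rightarrow> proc multiset option \<Rightarrow> bool" where
  "trel = rel_option (rel_mset gsim)"

lemma trel_refl: "wf_proc P \<Longrightarrow> trel (tg P) (tg P)"
  unfolding trel_def
  by (cases "tg P") (auto intro!: multiset.rel_refl_strong dest: tg_props intro: gsim_refl)

lemma rel_mset_sym: "rel_mset gsim M N \<Longrightarrow> rel_mset gsim N M"
proof -
  assume "rel_mset gsim M N"
  then have "rel_mset (conversep gsim) N M" by (simp add: multiset.rel_flip)
  then show ?thesis by (rule multiset.rel_mono_strong) (auto intro: gsim_sym)
qed

lemma rel_mset_trans: "rel_mset gsim M N \<Longrightarrow> rel_mset gsim N K \<Longrightarrow> rel_mset gsim M K"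
proof -
  assume "rel_mset gsim M N" "rel_mset gsim N K"
  then have "(rel_mset gsim OO rel_mset gsim) M K" by blast
  then have "rel_mset (gsim OO gsim) M K" by (simp add: multiset.rel_compp)
  then show ?thesis by (rule multiset.rel_mono_strong) (auto intro: gsim_trans)
qed

lemma trel_sym: "trel a b \<Longrightarrow> trel b a"
  unfolding trel_def by (cases a; cases b) (auto intro: rel_mset_sym)

lemma trel_trans: "trel a b \<Longrightarrow> trel b c \<Longrightarrow> trel a c"
  unfolding trel_def by (cases a; cases b; cases c) (auto intro: rel_mset_trans)

lemma rel_mset_plus: "rel_mset R M N \<Longrightarrow> rel_mset R M' N' \<Longrightarrow> rel_mset R (M + M') (N + N')"
proof -
  assume "rel_mset R M N" "rel_mset R M' N'"
  then obtain xs ys xs' ys' where "mset xs = M" "mset ys = N" "list_all2 R xs ys"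
    "mset xs' = M'" "mset ys' = N'" "list_all2 R xs' ys'" unfolding rel_mset_def by blast
  then show ?thesis unfolding rel_mset_def
    by (intro exI[of _ "xs @ xs'"] exI[of _ "ys @ ys'"]) (auto intro: list_all2_appendI)
qed

lemma rel_mset_vac: "rel_mset gsim M N \<Longrightarrow> (\<forall>g\<in>#M. n \<notin> fnp g) \<longleftrightarrow> (\<forall>g\<in>#N. n \<notin> fnp g)"
proof -
  assume "rel_mset gsim M N"
  then obtain xs ys where x: "mset xs = M" "mset ys = N" "list_all2 gsim xs ys" unfolding rel_mset_def by blast
  have "\<forall>x\<in>set xs. \<exists>y\<in>set ys. gsim x y" using x(3)
    by (auto simp: list_all2_conv_all_nth in_set_conv_nth) (metis nth_mem)
  moreover have "\<forall>y\<in>set ys. \<exists>x\<in>set xs. gsim x y" using x(3)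
    by (auto simp: list_all2_conv_all_nth in_set_conv_nth) (metis nth_mem)
  ultimately show ?thesis using x(1,2) by (auto dest: gsim_fnp) (metis gsim_fnp)+
qed

lemma tg_invariant: "P \<equiv>\<^sub>s Q \<Longrightarrow> wf_proc P \<Longrightarrow> trel (tg P) (tg Q)"
proof (induction rule: scong.induct)
  case (s_refl P) then show ?case by (rule trel_refl)
next
  case (s_sym P Q)
  then have "wf_proc P" using scong_wf by blast
  with s_sym show ?case by (metis trel_sym)
next
  case (s_trans P Q R)
  then have "wf_proc Q" using scong_wf by blast
  with s_trans show ?case by (metis trel_trans)
next
  case (s_par P P' Q Q')
  then have "trel (tg P) (tg P')" "trel (tg Q) (tg Q')" by auto
  then show ?case unfolding trel_def
    by (cases "tg P"; cases "tg P'"; cases "tg Q"; cases "tg Q'") (auto intro: rel_mset_plus)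
next
  case (s_rep P P') then show ?case by (simp add: trel_def)
next
  case (s_new P P' n)
  then have t: "trel (tg P) (tg P')" by auto
  then show ?case unfolding trel_def
    by (cases "tg P"; cases "tg P'") (auto dest: rel_mset_vac[where n=n])
next
  case (s_case P P' p)
  then have "gsim (Case p P) (Case p P')" by (intro gsim_case)
  then show ?case by (simp add: trel_def rel_mset_Plus rel_mset_Zero)
next
  case (s_alpha a P b)
  show ?case
  proof (cases "tg P")
    case None then show ?thesis by (simp add: trel_def proc_swap_ren tg_ren)
  next
    case (Some M)
    have "\<forall>g\<in>#M. gsim g (proc_swap a b g)"
    proof
      fix g assume g: "g \<in># M"
      then obtain p Q where gq: "g = Case p Q" and gs: "fnp g \<subseteq> fnp P" "wf_proc g"
        using tg_props[OF Some g] s_alpha.prems by blast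
      show "gsim g (proc_swap a b g)" unfolding gq
        by (rule gsim_swap) (use gq gs s_alpha.hyps in auto)
    qed
    then have "rel_mset gsim M (image_mset (proc_ren (swapn a b)) M)"
      by (auto simp: multiset.rel_map proc_swap_ren intro!: multiset.rel_refl_strong)
    then show ?thesis using Some by (simp add: trel_def proc_swap_ren tg_ren)
  qed
next
  case (s_par_zero P) then show ?case using trel_refl[of P] by (cases "tg P") (auto simp: trel_def)
next
  case (s_par_comm P Q)
  then have "trel (tg (Par P Q)) (tg (Par P Q))" by (intro trel_refl) simp
  then show ?case by (auto simp: trel_def add.commute split: option.splits)
next
  case (s_par_assoc P Q R)
  then have "trel (tg (Par P (Par Q R))) (tg (Par P (Par Q R)))" by (intro trel_refl) simp
  then show ?case by (auto simp: trel_def add.assoc split: option.splits)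
next
  case (s_new_zero n) then show ?case by (simp add: trel_def rel_mset_Zero)
next
  case (s_new_new n m P)
  then have "trel (tg (New n (New m P))) (tg (New n (New m P)))" by (intro trel_refl) simp
  moreover have "tg (New n (New m P)) = tg (New m (New n P))" by (auto split: option.splits)
  ultimately show ?case by simp
next
  case (s_rep_unf P) then show ?case by (simp add: trel_def split: option.splits)
next
  case (s_extr n P Q)
  then have "trel (tg (Par P (New n Q))) (tg (Par P (New n Q)))" by (intro trel_refl) simp
  moreover have "tg (Par P (New n Q)) = tg (New n (Par P Q))"
  proof (cases "tg P")
    case (Some M)
    then have "\<forall>g\<in>#M. n \<notin> fnp g" using tg_props[OF Some] s_extr.hyps by blast
    then show ?thesis using Some by (auto split: option.splits)
  qed simp
  ultimately show ?case by simp
qed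


lemma Nm_add_sub: "Nm (s1 ++ s2) A \<subseteq> Nm s1 A \<union> Nm s2 A"
  unfolding Nm_def by (auto simp: map_add_def split: option.splits)

lemma unify_fn: "unify p q = Some (\<sigma>, \<rho>) \<Longrightarrow> Nm \<sigma> UNIV \<subseteq> fn q \<and> Nm \<rho> UNIV \<subseteq> fn p \<and> dom \<sigma> = bn p \<and> dom \<rho> = bn q"
proof (induction p arbitrary: q \<sigma> \<rho>)
  case (PBind x)
  then show ?case by (auto simp: Nm_def fn_def communicable_def split: if_splits)
next
  case (PVar x)
  then show ?case by (cases q) (auto simp: Nm_def fn_def split: if_splits)
next
  case (PProt x)
  then show ?case by (cases q) (auto simp: Nm_def fn_def split: if_splits)
next
  case (PComp p1 p2)
  show ?case
  proof (cases q)
    case (PBind y)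
    then show ?thesis using PComp.prems by (auto simp: Nm_def fn_def communicable_def split: if_splits)
  next
    case (PVar y) then show ?thesis using PComp.prems by simp
  next
    case (PProt y) then show ?thesis using PComp.prems by simp
  next
    case (PComp q1 q2)
    from PComp.prems this obtain s1 r1 s2 r2 where u: "unify p1 q1 = Some (s1, r1)"
      "unify p2 q2 = Some (s2, r2)" "\<sigma> = s1 ++ s2" "\<rho> = r1 ++ r2"
      by (auto split: option.splits)
    have i1: "Nm s1 UNIV \<subseteq> fn q1 \<and> Nm r1 UNIV \<subseteq> fn p1 \<and> dom s1 = bn p1 \<and> dom r1 = bn q1"
      using PComp.IH(1)[OF u(1)] .
    have i2: "Nm s2 UNIV \<subseteq> fn q2 \<and> Nm r2 UNIV \<subseteq> fn p2 \<and> dom s2 = bn p2 \<and> dom r2 = bn q2"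
      using PComp.IH(2)[OF u(2)] .
    show ?thesis using i1 i2 u Nm_add_sub[of s1 s2 UNIV] Nm_add_sub[of r1 r2 UNIV] PComp
      by (auto simp: dom_map_add)
  qed
qed

lemma unify_subst: "unify p q = Some (\<sigma>, \<rho>) \<Longrightarrow> wf_pat p \<Longrightarrow> wf_pat q \<Longrightarrow> is_subst \<sigma> \<and> is_subst \<rho>"
proof -
  assume u: "unify p q = Some (\<sigma>, \<rho>)" "wf_pat p" "wf_pat q"
  have "unif_ok p q p q \<sigma> \<rho>" using unify_transfer[OF u(1)] u(2,3) by (simp add: wf_pat_distinct)
  then show ?thesis unfolding unif_ok_def by (auto intro: is_subst_map_of)
qed

lemma reduct_fnp:
  assumes u: "unify p q = Some (\<sigma>, \<rho>)" and w: "wf_proc (Case p P)" "wf_proc (Case q Q)"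
  shows "fnp (Par (psub \<sigma> P) (psub \<rho> Q)) \<subseteq> fnp (Case p P) \<union> fnp (Case q Q)"
proof -
  have s: "is_subst \<sigma>" "is_subst \<rho>" using unify_subst[OF u] w by auto
  have f: "Nm \<sigma> UNIV \<subseteq> fn q" "Nm \<rho> UNIV \<subseteq> fn p" "dom \<sigma> = bn p" "dom \<rho> = bn q" using unify_fn[OF u] by auto
  have "fnp (psub \<sigma> P) \<subseteq> (fnp P - dom \<sigma>) \<union> Nm \<sigma> (fnp P)" using fnp_psub[OF _ s(1)] w by simp
  moreover have "fnp (psub \<rho> Q) \<subseteq> (fnp Q - dom \<rho>) \<union> Nm \<rho> (fnp Q)" using fnp_psub[OF _ s(2)] w by simp
  moreover have "Nm \<sigma> (fnp P) \<subseteq> Nm \<sigma> UNIV" "Nm \<rho> (fnp Q) \<subseteq> Nm \<rho> UNIV"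
    using Nm_mono[of "fnp P" UNIV \<sigma>] Nm_mono[of "fnp Q" UNIV \<rho>] by auto
  ultimately show ?thesis using f by auto
qed

lemma red_inv:
  assumes "Y \<longmapsto> Y'" "wf_proc Y" "tg Y = Some M"
  shows "\<exists>p P q Q \<sigma>1 \<rho>1 N J. rel_mset gsim ({#Case p P, Case q Q#} + N) M \<and> unify p q = Some (\<sigma>1, \<rho>1) \<and>
     tg J = Some N \<and> wf_proc (Case p P) \<and> wf_proc (Case q Q) \<and>
     Y' \<equiv>\<^sub>s Par (Par (psub \<sigma>1 P) (psub \<rho>1 Q)) J"
  using assms
proof (induction arbitrary: M rule: red.induct)
  case (r_comm p q \<sigma> \<rho> P Q)
  have M: "M = {#Case p P, Case q Q#}" using r_comm.prems by (auto simp: add_mset_commute)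
  have "rel_mset gsim ({#Case p P, Case q Q#} + {#}) M"
    unfolding M using r_comm.prems(1)
    by (auto intro!: multiset.rel_refl_strong gsim_refl)
  moreover have "Par (psub \<sigma> P) (psub \<rho> Q) \<equiv>\<^sub>s Par (Par (psub \<sigma> P) (psub \<rho> Q)) Zero"
    by (rule s_sym[OF s_par_zero])
  ultimately show ?case using r_comm.hyps r_comm.prems(1)
    by (intro exI[of _ p] exI[of _ P] exI[of _ q] exI[of _ Q] exI[of _ \<sigma>] exI[of _ \<rho>] exI[of _ "{#}"] exI[of _ Zero]) auto
next
  case (r_par A A' B)
  from r_par.prems(2) obtain MA MB where m: "tg A = Some MA" "tg B = Some MB" "M = MA + MB"
    unfolding tg_Par_Some by blast
  have wA: "wf_proc A" "wf_proc B" using r_par.prems by auto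
  obtain p P q Q \<sigma>1 \<rho>1 N J where I: "rel_mset gsim ({#Case p P, Case q Q#} + N) MA" "unify p q = Some (\<sigma>1, \<rho>1)"
     "tg J = Some N" "wf_proc (Case p P)" "wf_proc (Case q Q)" "A' \<equiv>\<^sub>s Par (Par (psub \<sigma>1 P) (psub \<rho>1 Q)) J"
    using r_par.IH[OF wA(1) m(1)] by blast
  have rB: "rel_mset gsim MB MB" using m(2) wA(2)
    by (intro multiset.rel_refl_strong) (metis tg_props gsim_refl)
  have r: "rel_mset gsim ({#Case p P, Case q Q#} + (N + MB)) M"
    using rel_mset_plus[OF I(1) rB] m(3) by (simp add: add.assoc)
  have tJ: "tg (Par J B) = Some (N + MB)" using I(3) m(2) by simp
  have "Par A' B \<equiv>\<^sub>s Par (Par (Par (psub \<sigma>1 P) (psub \<rho>1 Q)) J) B" using I(6) by (intro s_par s_refl)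
  also have "\<dots> \<equiv>\<^sub>s Par (Par (psub \<sigma>1 P) (psub \<rho>1 Q)) (Par J B)" by (rule s_sym[OF s_par_assoc])
  finally show ?case using r I tJ by blast
next
  case (r_new A A' n)
  from r_new.prems(2) have m: "tg A = Some M" "\<forall>g\<in>#M. n \<notin> fnp g" unfolding tg_New_Some by blast+
  have wA: "wf_proc A" using r_new.prems by auto
  obtain p P q Q \<sigma>1 \<rho>1 N J where I: "rel_mset gsim ({#Case p P, Case q Q#} + N) M" "unify p q = Some (\<sigma>1, \<rho>1)"
     "tg J = Some N" "wf_proc (Case p P)" "wf_proc (Case q Q)" "A' \<equiv>\<^sub>s Par (Par (psub \<sigma>1 P) (psub \<rho>1 Q)) J"
    using r_new.IH[OF wA m(1)] by blast
  have vac: "\<forall>g\<in>#({#Case p P, Case q Q#} + N). n \<notin> fnp g" using rel_mset_vac[OF I(1)] m(2) by blast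
  have "fnp (Par (psub \<sigma>1 P) (psub \<rho>1 Q)) \<subseteq> fnp (Case p P) \<union> fnp (Case q Q)"
    by (rule reduct_fnp[OF I(2,4,5)])
  moreover have "fnp J \<subseteq> (\<Union>g\<in>set_mset N. fnp g)" by (rule tg_fnp_sub[OF I(3)])
  ultimately have nf: "n \<notin> fnp (Par (Par (psub \<sigma>1 P) (psub \<rho>1 Q)) J)" using vac by auto
  have "New n A' \<equiv>\<^sub>s New n (Par (Par (psub \<sigma>1 P) (psub \<rho>1 Q)) J)" using I(6) by (rule s_new)
  also have "\<dots> \<equiv>\<^sub>s Par (Par (psub \<sigma>1 P) (psub \<rho>1 Q)) J" using nf by (rule new_vac)
  finally show ?case using I by blast
next
  case (r_struct A A0 B0 B)
  have wA0: "wf_proc A0" using scong_wf[OF r_struct.hyps(1)] r_struct.prems by simp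
  have "trel (tg A) (tg A0)" using tg_invariant[OF r_struct.hyps(1) r_struct.prems(1)] .
  then obtain M0 where M0: "tg A0 = Some M0" "rel_mset gsim M M0"
    using r_struct.prems(2) unfolding trel_def by (cases "tg A0") auto
  obtain p P q Q \<sigma>1 \<rho>1 N J where I: "rel_mset gsim ({#Case p P, Case q Q#} + N) M0" "unify p q = Some (\<sigma>1, \<rho>1)"
     "tg J = Some N" "wf_proc (Case p P)" "wf_proc (Case q Q)" "B0 \<equiv>\<^sub>s Par (Par (psub \<sigma>1 P) (psub \<rho>1 Q)) J"
    using r_struct.IH[OF wA0 M0(1)] by blast
  have "rel_mset gsim ({#Case p P, Case q Q#} + N) M"
    using rel_mset_trans[OF I(1) rel_mset_sym[OF M0(2)]] .
  moreover have "B \<equiv>\<^sub>s Par (Par (psub \<sigma>1 P) (psub \<rho>1 Q)) J"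
    using s_trans[OF s_sym[OF r_struct.hyps(3)] I(6)] .
  ultimately show ?case using I by blast
qed


lemma red_wf: "Y \<longmapsto> Y' \<Longrightarrow> wf_proc Y \<Longrightarrow> wf_proc Y'"
proof (induction rule: red.induct)
  case (r_comm p q \<sigma> \<rho> P Q)
  then have "is_subst \<sigma>" "is_subst \<rho>" using unify_subst by auto
  then show ?case using r_comm by (auto intro: wf_psub)
next
  case (r_struct P P0 Q0 Q)
  then show ?case using scong_wf by blast
qed auto

lemma wf_fill: "wf_ctx C \<Longrightarrow> wf_proc P \<Longrightarrow> wf_proc (fill C P)"
  by (induction C) auto

lemma scong_fill: "P \<equiv>\<^sub>s Q \<Longrightarrow> fill C P \<equiv>\<^sub>s fill C Q"
  by (induction C) (auto intro: s_par s_refl s_rep s_new s_case)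

lemma bc_intro: "on_procs R \<Longrightarrow> symp R \<Longrightarrow> barb_preserving R \<Longrightarrow> reduction_closed R \<Longrightarrow> context_closed R
  \<Longrightarrow> R P Q \<Longrightarrow> P \<simeq> Q"
  unfolding barbed_cong_def by blast

lemma scong_bc: "P \<equiv>\<^sub>s Q \<Longrightarrow> wf_proc P \<Longrightarrow> P \<simeq> Q"
proof -
  assume e: "P \<equiv>\<^sub>s Q" and w: "wf_proc P"
  define R where "R = (\<lambda>A B. A \<equiv>\<^sub>s B \<and> wf_proc A \<and> wf_proc B)"
  have "on_procs R" unfolding on_procs_def R_def by blast
  moreover have "symp R" unfolding symp_def R_def by (blast intro: s_sym)
  moreover have "barb_preserving R" unfolding barb_preserving_def R_def barb_def
    by (blast intro: s_trans s_sym)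
  moreover have "reduction_closed R" unfolding reduction_closed_def R_def
  proof (intro allI impI)
    fix A B A' assume a: "A \<equiv>\<^sub>s B \<and> wf_proc A \<and> wf_proc B" "A \<longmapsto> A'"
    have "B \<longmapsto> A'" using r_struct[OF s_sym[of A B] a(2) s_refl] a(1) by blast
    moreover have "wf_proc A'" using red_wf a by blast
    ultimately show "\<exists>B'. B \<longmapsto> B' \<and> A' \<equiv>\<^sub>s B' \<and> wf_proc A' \<and> wf_proc B'" using s_refl by blast
  qed
  moreover have "context_closed R" unfolding context_closed_def R_def
    using scong_fill wf_fill by blast
  moreover have "R P Q" unfolding R_def using e w scong_wf[OF e] by blast
  ultimately show ?thesis by (rule bc_intro)
qed

lemma bc_elim: "P \<simeq> Q \<Longrightarrow> \<exists>R. on_procs R \<and> symp R \<and> barb_preserving R \<and> reduction_closed R \<and> context_closed R \<and> R P Q"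
  unfolding barbed_cong_def by blast

lemma bc_trans: "P \<simeq> Q \<Longrightarrow> Q \<simeq> T \<Longrightarrow> P \<simeq> T"
proof -
  assume "P \<simeq> Q" "Q \<simeq> T"
  then obtain R1 R2 where R1: "on_procs R1" "symp R1" "barb_preserving R1" "reduction_closed R1" "context_closed R1" "R1 P Q"
    and R2: "on_procs R2" "symp R2" "barb_preserving R2" "reduction_closed R2" "context_closed R2" "R2 Q T"
    using bc_elim by metis
  define S where "S = (\<lambda>A B. (\<exists>X. R1 A X \<and> R2 X B) \<or> (\<exists>X. R2 A X \<and> R1 X B))"
  have "on_procs S" using R1(1) R2(1) unfolding on_procs_def S_def by blast
  moreover have "symp S" using R1(2) R2(2) unfolding symp_def S_def by blast
  moreover have "barb_preserving S" using R1(3) R2(3) unfolding barb_preserving_def S_def by blast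
  moreover have "reduction_closed S" unfolding reduction_closed_def
  proof (intro allI impI)
    fix A B A' assume s: "S A B" and r: "A \<longmapsto> A'"
    show "\<exists>B'. B \<longmapsto> B' \<and> S A' B'"
    proof (cases "\<exists>X. R1 A X \<and> R2 X B")
      case True
      then obtain X where X: "R1 A X" "R2 X B" by blast
      obtain X' where "X \<longmapsto> X'" "R1 A' X'" using R1(4) X(1) r unfolding reduction_closed_def by blast
      moreover obtain B' where "B \<longmapsto> B'" "R2 X' B'" using R2(4) X(2) calculation(1) unfolding reduction_closed_def by blast
      ultimately show ?thesis unfolding S_def by blast
    next
      case False
      then obtain X where X: "R2 A X" "R1 X B" using s unfolding S_def by blast
      obtain X' where "X \<longmapsto> X'" "R2 A' X'" using R2(4) X(1) r unfolding reduction_closed_def by blast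
      moreover obtain B' where "B \<longmapsto> B'" "R1 X' B'" using R1(4) X(2) calculation(1) unfolding reduction_closed_def by blast
      ultimately show ?thesis unfolding S_def by blast
    qed
  qed
  moreover have "context_closed S" using R1(5) R2(5) unfolding context_closed_def S_def by blast
  moreover have "S P T" using R1(6) R2(6) unfolding S_def by blast
  ultimately show ?thesis by (rule bc_intro)
qed

lemma bc_wf: "P \<simeq> Q \<Longrightarrow> wf_proc P \<and> wf_proc Q"
  unfolding barbed_cong_def on_procs_def by blast


fun mkp :: "name list \<Rightarrow> pat" where
  "mkp [] = PBind 0"
| "mkp [x] = PBind x"
| "mkp (x # y # xs) = PComp (PBind x) (mkp (y # xs))"

fun mkq :: "pat list \<Rightarrow> pat" where
  "mkq [] = PVar 0"
| "mkq [v] = v"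
| "mkq (v # w # vs) = PComp v (mkq (w # vs))"

lemma mkp_props: "xs \<noteq> [] \<Longrightarrow> bnl (mkp xs) = xs \<and> fn (mkp xs) = {}"
  by (induction xs rule: mkp.induct) auto

lemma mkq_props: "vs \<noteq> [] \<Longrightarrow> \<forall>v\<in>set vs. communicable v \<Longrightarrow> communicable (mkq vs)"
  by (induction vs rule: mkq.induct) auto

lemma unify_bind_right: "communicable v \<Longrightarrow> unify v (PBind x) = Some (Map.empty, [x \<mapsto> v])"
  by (cases v) auto

lemma unify_mk: "length xs = length vs \<Longrightarrow> xs \<noteq> [] \<Longrightarrow> distinct xs \<Longrightarrow> \<forall>v\<in>set vs. communicable v \<Longrightarrow>
  unify (mkp xs) (mkq vs) = Some (mz xs vs, Map.empty) \<and> unify (mkq vs) (mkp xs) = Some (Map.empty, mz xs vs)"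
proof (induction xs arbitrary: vs rule: mkp.induct)
  case 1 then show ?case by simp
next
  case (2 x)
  then obtain v where v: "vs = [v]" by (cases vs) auto
  then show ?case using 2 by (auto simp: unify_bind_right fun_eq_iff)
next
  case (3 x y xs)
  then obtain v w ws where v: "vs = v # w # ws" by (cases vs; cases "tl vs") auto
  have IH: "unify (mkp (y # xs)) (mkq (w # ws)) = Some (mz (y # xs) (w # ws), Map.empty) \<and>
            unify (mkq (w # ws)) (mkp (y # xs)) = Some (Map.empty, mz (y # xs) (w # ws))"
    using 3 v by auto
  have cv: "communicable v" using 3 v by simp
  have e: "mz (x # y # xs) (v # w # ws) = [x \<mapsto> v] ++ mz (y # xs) (w # ws)"
    using mz_append[of "[x]" "[v]" "y # xs" "w # ws"] 3 by simp
  show ?case using IH cv v e by (auto simp: unify_bind_right fun_eq_iff)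
qed

lemma mz_self: "finite (dom \<sigma>) \<Longrightarrow> mz (sorted_list_of_set (dom \<sigma>)) (map (\<lambda>z. the (\<sigma> z)) (sorted_list_of_set (dom \<sigma>))) = \<sigma>"
proof
  fix z assume f: "finite (dom \<sigma>)"
  let ?xs = "sorted_list_of_set (dom \<sigma>)"
  have s: "set ?xs = dom \<sigma>" using f by simp
  show "mz ?xs (map (\<lambda>z. the (\<sigma> z)) ?xs) z = \<sigma> z"
  proof (cases "z \<in> dom \<sigma>")
    case True
    then show ?thesis using s by (auto simp: map_of_zip_map)
  next
    case False
    then show ?thesis using s by (auto simp: map_of_zip_map)
  qed
qed

lemma gsim_elim: "gsim (Case p P) (Case p' P') \<Longrightarrow> skel p = skel p' \<and> wf_pat p \<and> wf_pat p' \<and>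
  (\<forall>vs. length vs = length (bnl p) \<longrightarrow> (\<forall>v\<in>set vs. communicable v) \<longrightarrow>
        psub (mz (bnl p) vs) P \<equiv>\<^sub>s psub (mz (bnl p') vs) P')"
  unfolding gsim_def by auto

lemma rel_mset_two: "rel_mset R {#a, b#} {#c, d#} \<Longrightarrow> (R a c \<and> R b d) \<or> (R a d \<and> R b c)"
proof -
  assume r: "rel_mset R {#a, b#} {#c, d#}"
  obtain N1 e where e: "{#c, d#} = add_mset e N1" "R a e" "rel_mset R {#b#} N1"
    using msed_rel_invL[OF r] by blast
  obtain N2 f where f: "N1 = add_mset f N2" "R b f" "rel_mset R {#} N2"
    using msed_rel_invL[OF e(3)] by blast
  have "N2 = {#}" using f(3) by simp
  then have "{#c, d#} = {#e, f#}" using e(1) f(1) by simp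
  then have "(e = c \<and> f = d) \<or> (e = d \<and> f = c)"
    by (auto simp: add_eq_conv_diff)
  then show ?thesis using e f by auto
qed


theorem lemma3p33:
  fixes P Q :: proc and \<sigma> :: subst
  assumes "is_subst \<sigma>"
    and "P \<simeq> Q"
  shows "psub \<sigma> P \<simeq> psub \<sigma> Q"
proof -
  obtain R where R: "on_procs R" "symp R" "barb_preserving R" "reduction_closed R" "context_closed R" "R P Q"
    using bc_elim[OF assms(2)] by blast
  have wP: "wf_proc P" and wQ: "wf_proc Q" using R(1,6) unfolding on_procs_def by auto
  have fin: "finite (fnp P \<union> fnp Q \<union> dom \<sigma>)" using assms(1) by (simp add: finite_dom_subst)
  obtain x0 where x0: "x0 \<notin> fnp P \<union> fnp Q \<union> dom \<sigma>" using fresh_avoid[OF fin] by blast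
  define \<sigma>0 where "\<sigma>0 = \<sigma>(x0 \<mapsto> PVar x0)"
  have is0: "is_subst \<sigma>0" unfolding \<sigma>0_def using assms(1) by (intro is_subst_upd) auto
  have eP: "psub \<sigma> P \<equiv>\<^sub>s psub \<sigma>0 P" using x0 by (intro psub_agree wP assms(1) is0) (auto simp: \<sigma>0_def)
  have eQ: "psub \<sigma>0 Q \<equiv>\<^sub>s psub \<sigma> Q" using x0 by (intro psub_agree wQ assms(1) is0) (auto simp: \<sigma>0_def)
  define xs where "xs = sorted_list_of_set (dom \<sigma>0)"
  define vs where "vs = map (\<lambda>z. the (\<sigma>0 z)) xs"
  have fd: "finite (dom \<sigma>0)" using is0 by (simp add: finite_dom_subst)
  have mzs: "mz xs vs = \<sigma>0" unfolding xs_def vs_def using mz_self[OF fd] .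
  have dxs: "distinct xs" "set xs = dom \<sigma>0" using fd by (auto simp: xs_def)
  have nxs: "xs \<noteq> []" using dxs(2) by (auto simp: \<sigma>0_def)
  have lv: "length xs = length vs" by (simp add: vs_def)
  have cvs: "\<forall>v\<in>set vs. communicable v"
  proof
    fix v assume "v \<in> set vs"
    then obtain z where z: "z \<in> set xs" "v = the (\<sigma>0 z)" by (auto simp: vs_def)
    then have "\<sigma>0 z = Some v" using dxs(2) by auto
    then show "communicable v" using is_subst_comm[OF is0] by blast
  qed
  define p0 where "p0 = mkp xs"
  define q0 where "q0 = mkq vs"
  have bp0: "bnl p0 = xs" "fn p0 = {}" using mkp_props[OF nxs] by (auto simp: p0_def)
  have nvs: "vs \<noteq> []" using lv nxs by auto
  have cq0: "communicable q0" unfolding q0_def by (rule mkq_props[OF nvs cvs])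
  have bq0: "bnl q0 = []" using communicable_bnl[OF cq0] .
  have wp0: "wf_pat p0" unfolding wf_pat_def using bp0 dxs by (auto simp: bn_def)
  have wq0: "wf_pat q0" unfolding wf_pat_def using bq0 by (auto simp: bn_def)
  have u: "unify p0 q0 = Some (\<sigma>0, Map.empty)" "unify q0 p0 = Some (Map.empty, \<sigma>0)"
    using unify_mk[OF lv nxs dxs(1) cvs] mzs by (auto simp: p0_def q0_def)
  define C where "C = CParL (CCase p0 Hole) (Case q0 Zero)"
  have wC: "wf_ctx C" unfolding C_def using wp0 wq0 by simp
  have RC: "R (fill C P) (fill C Q)" using R(5) R(6) wC unfolding context_closed_def by blast
  have redP: "fill C P \<longmapsto> Par (psub \<sigma>0 P) Zero"
    using r_comm[OF u(1), of P Zero] by (simp add: C_def)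
  obtain Q' where Q': "fill C Q \<longmapsto> Q'" "R (Par (psub \<sigma>0 P) Zero) Q'"
    using R(4) RC redP unfolding reduction_closed_def by blast
  have wfCQ: "wf_proc (fill C Q)" using wf_fill[OF wC wQ] .
  have tgCQ: "tg (fill C Q) = Some {#Case p0 Q, Case q0 Zero#}" by (simp add: C_def add_mset_commute)
  obtain p1 P1 q1 Q1 \<sigma>1 \<rho>1 N J where I: "rel_mset gsim ({#Case p1 P1, Case q1 Q1#} + N) {#Case p0 Q, Case q0 Zero#}"
    "unify p1 q1 = Some (\<sigma>1, \<rho>1)" "tg J = Some N" "wf_proc (Case p1 P1)" "wf_proc (Case q1 Q1)"
    "Q' \<equiv>\<^sub>s Par (Par (psub \<sigma>1 P1) (psub \<rho>1 Q1)) J"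
    using red_inv[OF Q'(1) wfCQ tgCQ] by blast
  have "size ({#Case p1 P1, Case q1 Q1#} + N) = size {#Case p0 Q, Case q0 Zero#}" using rel_mset_size[OF I(1)] .
  then have N: "N = {#}" by simp
  have J: "J \<equiv>\<^sub>s Zero" using tg_zero I(3) N by simp
  have two: "(gsim (Case p1 P1) (Case p0 Q) \<and> gsim (Case q1 Q1) (Case q0 Zero)) \<or>
             (gsim (Case p1 P1) (Case q0 Zero) \<and> gsim (Case q1 Q1) (Case p0 Q))"
    using rel_mset_two[of gsim] I(1) N by simp
  have d1: "distinct (bnl p1)" "distinct (bnl q1)" using I(4,5) by (auto simp: wf_pat_distinct)
  have d0: "distinct (bnl p0)" "distinct (bnl q0)" using wp0 wq0 by (auto simp: wf_pat_distinct)
  have red_eq: "Par (psub \<sigma>1 P1) (psub \<rho>1 Q1) \<equiv>\<^sub>s psub \<sigma>0 Q"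
    using two
  proof
    assume a: "gsim (Case p1 P1) (Case p0 Q) \<and> gsim (Case q1 Q1) (Case q0 Zero)"
    have g1: "skel p1 = skel p0" "\<forall>vs. length vs = length (bnl p1) \<longrightarrow> (\<forall>v\<in>set vs. communicable v) \<longrightarrow>
        psub (mz (bnl p1) vs) P1 \<equiv>\<^sub>s psub (mz (bnl p0) vs) Q" using gsim_elim a by blast+
    have g2: "skel q1 = skel q0" "\<forall>vs. length vs = length (bnl q1) \<longrightarrow> (\<forall>v\<in>set vs. communicable v) \<longrightarrow>
        psub (mz (bnl q1) vs) Q1 \<equiv>\<^sub>s psub (mz (bnl q0) vs) Zero" using gsim_elim a by blast+
    have "unif_ok p1 q1 p0 q0 \<sigma>1 \<rho>1" using unify_transfer[OF I(2)] g1(1) g2(1) d1 d0 by simp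
    then obtain ws1 ws2 where w: "length ws1 = length (bnl p1)" "length ws2 = length (bnl q1)"
      "\<forall>v\<in>set ws1. communicable v" "\<forall>w\<in>set ws2. communicable w" "\<sigma>1 = mz (bnl p1) ws1" "\<rho>1 = mz (bnl q1) ws2"
      "unify p0 q0 = Some (mz (bnl p0) ws1, mz (bnl q0) ws2)" unfolding unif_ok_def by blast
    have s1: "mz (bnl p0) ws1 = \<sigma>0" using w(7) u(1) by simp
    have "psub \<sigma>1 P1 \<equiv>\<^sub>s psub \<sigma>0 Q" using g1(2) w s1 by metis
    moreover have "psub \<rho>1 Q1 \<equiv>\<^sub>s Zero" using g2(2) w by simp
    ultimately have "Par (psub \<sigma>1 P1) (psub \<rho>1 Q1) \<equiv>\<^sub>s Par (psub \<sigma>0 Q) Zero" by (rule s_par)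
    then show ?thesis using s_par_zero s_trans by blast
  next
    assume a: "gsim (Case p1 P1) (Case q0 Zero) \<and> gsim (Case q1 Q1) (Case p0 Q)"
    have g1: "skel p1 = skel q0" "\<forall>vs. length vs = length (bnl p1) \<longrightarrow> (\<forall>v\<in>set vs. communicable v) \<longrightarrow>
        psub (mz (bnl p1) vs) P1 \<equiv>\<^sub>s psub (mz (bnl q0) vs) Zero" using gsim_elim a by blast+
    have g2: "skel q1 = skel p0" "\<forall>vs. length vs = length (bnl q1) \<longrightarrow> (\<forall>v\<in>set vs. communicable v) \<longrightarrow>
        psub (mz (bnl q1) vs) Q1 \<equiv>\<^sub>s psub (mz (bnl p0) vs) Q" using gsim_elim a by blast+
    have "unif_ok p1 q1 q0 p0 \<sigma>1 \<rho>1" using unify_transfer[OF I(2)] g1(1) g2(1) d1 d0 by simp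
    then obtain ws1 ws2 where w: "length ws1 = length (bnl p1)" "length ws2 = length (bnl q1)"
      "\<forall>v\<in>set ws1. communicable v" "\<forall>w\<in>set ws2. communicable w" "\<sigma>1 = mz (bnl p1) ws1" "\<rho>1 = mz (bnl q1) ws2"
      "unify q0 p0 = Some (mz (bnl q0) ws1, mz (bnl p0) ws2)" unfolding unif_ok_def by blast
    have s1: "mz (bnl p0) ws2 = \<sigma>0" using w(7) u(2) by simp
    have "psub \<rho>1 Q1 \<equiv>\<^sub>s psub \<sigma>0 Q" using g2(2) w s1 by metis
    moreover have "psub \<sigma>1 P1 \<equiv>\<^sub>s Zero" using g1(2) w by simp
    ultimately have "Par (psub \<sigma>1 P1) (psub \<rho>1 Q1) \<equiv>\<^sub>s Par Zero (psub \<sigma>0 Q)" by (intro s_par)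
    also have "Par Zero (psub \<sigma>0 Q) \<equiv>\<^sub>s Par (psub \<sigma>0 Q) Zero" by (rule s_par_comm)
    also have "Par (psub \<sigma>0 Q) Zero \<equiv>\<^sub>s psub \<sigma>0 Q" by (rule s_par_zero)
    finally show ?thesis .
  qed
  have "Q' \<equiv>\<^sub>s Par (Par (psub \<sigma>1 P1) (psub \<rho>1 Q1)) Zero" using I(6) J by (meson s_par s_refl s_trans)
  also have "\<dots> \<equiv>\<^sub>s Par (psub \<sigma>1 P1) (psub \<rho>1 Q1)" by (rule s_par_zero)
  also have "\<dots> \<equiv>\<^sub>s psub \<sigma>0 Q" by (rule red_eq)
  also have "\<dots> \<equiv>\<^sub>s psub \<sigma> Q" by (rule eQ)
  finally have eQ': "Q' \<equiv>\<^sub>s psub \<sigma> Q" .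
  have wfQ': "wf_proc Q'" using R(1) Q'(2) unfolding on_procs_def by blast
  have wfsP: "wf_proc (psub \<sigma> P)" using wf_psub[OF wP assms(1)] .
  have "psub \<sigma> P \<equiv>\<^sub>s Par (psub \<sigma>0 P) Zero" using eP s_sym[OF s_par_zero] s_trans by blast
  then have b1: "psub \<sigma> P \<simeq> Par (psub \<sigma>0 P) Zero" using wfsP by (rule scong_bc)
  have b2: "Par (psub \<sigma>0 P) Zero \<simeq> Q'" using bc_intro[OF R(1-5) Q'(2)] .
  have b3: "Q' \<simeq> psub \<sigma> Q" using eQ' wfQ' by (rule scong_bc)
  show ?thesis using bc_trans[OF bc_trans[OF b1 b2] b3] .
qed


end
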